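(* In the i.i.d. setting below, assume [B1]–[B5]. Let $g:\mathbb R^d\times\{0,1\}\times(0,\infty)\times(0,\infty)\to\mathbb R$ be measurable with $E[|g(V^1)|^2\mid Z^1=1]<\infty$. Then, as $n\to\infty$, $$\frac1{nP(Z^1=1)}\sum_{i\in G^1}g(V^i)\to^pE\big[g(V^1)1_{\{X^1\in\mathcal X\}}\mid Z^1=1\big],\qquad n_1^-\sum_{i\in G^1}g(V^i)\to^pE\big[g(V^1)\mid X^1\in\mathcal X,Z^1=1\big].$$ In particular $n_1/(nP(Z^1=1))\to^pP(X^1\in\mathcal X\mid Z^1=1)>0$.
   Context: For each $n\in\mathbb N$, $\mathbb G=\{1,\dots,n\}$ and each $i$ has a survival time $T^i>0$, censoring time $U^i>0$, covariate $X^i\in\mathbb R^d$ and assignment $Z^i\in\{0,1\}$; the vectors $V^i=(X^i,Z^i,T^i,U^i)$, $i=1,\dots,n$, are i.i.d. for each $n$, and for each $z$ the conditional law of $(X^1,T^1,U^1)$ given $Z^1=z$ does not depend on $n$. Put $\widetilde T^i=T^i\wedge U^i$, $\mathbb G^z=\{i:Z^i=z\}$, $Y^i_t=1_{\{\widetilde T^i\ge t\}}$. Fix $\tau>0$, a compact $\mathcal X\subset\mathbb R^d$ and, for each $n$, a finite partition $\mathbb A$ of $\mathcal X$ into measurable sets; $d_n=\max_{a\in\mathbb A}\mathrm{diam}(a)$. Let $\mathcal P=\{(i,j)\in\mathbb G^1\times\mathbb G^0:\ X^i,X^j\in a\text{ for some }a\in\mathbb A\}$, $G^1$ the set of first coordinates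 of elements of $\mathcal P$, $n_1=\#G^1$; $x^-=x^{-1}$ if $x\ne0$, $0^-=0$. $a_n\lesssim b_n$ means $a_n\le Cb_n$ for a constant $C>0$ and all $n$; $a_n\asymp b_n$ means both $\lesssim$ and $\gtrsim$. [B1]: constants $\beta,\theta\in(0,1)$ and $\bar d\in\{1,\dots,d\}$ satisfy $\beta<2\theta$ and $\bar d\theta<1$. [B2]: $P(Z^1=1)\asymp n^{\beta-1}$. [B3]: the conditional law of $X^1$ given $Z^1=z$ has a density $f(\cdot\mid z)$ w.r.t. a $\sigma$-finite measure $\nu$ on $\mathbb R^d$ with $\nu(\mathcal X)<\infty$, and $\operatorname{ess\,sup}_{x\in\mathcal X}f(x\mid1)<\infty$, $\operatorname{ess\,inf}_{x\in\mathcal X}\big(f(x\mid0)E[Y^1_\tau\mid X^1=x,Z^1=0]\big)>0$ (w.r.t. $\nu$). [B4]: $P(\widetilde T^1=s,X^1\in\mathcal X\mid Z^1=1)=0$ for all $s\in[0,\tau]$ and $P(\widetilde T^1\ge\tau,X^1\in\mathcal X\mid Z^1=1)>0$. [B5]: $d_n=O(n^{-\theta})$ and $n^{-\bar d\theta}\lesssim\min_{a\in\mathbb A}\nu(a)\le\max_{a\in\mathbb A}\nu(a)\lesssim n^{-\bar d\theta}$. *)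

theory Defs
  imports "HOL-Probability.Probability"
begin

text \<open>An observation V = (X, Z, T, U); the assignment Z is encoded as a boolean (True = 1).\<close>
type_synonym ('d) obs = "(real^'d::finite) \<times> bool \<times> real \<times> real"

definition obsM :: "('d::finite) obs measure" where
  "obsM = borel \<Otimes>\<^sub>M (count_space UNIV \<Otimes>\<^sub>M (borel \<Otimes>\<^sub>M borel))"

definition xtuM :: "((real^'d::finite) \<times> real \<times> real) measure" where
  "xtuM = borel \<Otimes>\<^sub>M (borel \<Otimes>\<^sub>M borel)"

definition Xof :: "('d::finite) obs \<Rightarrow> real^'d" where "Xof v = fst v"
definition Zof :: "('d::finite) obs \<Rightarrow> bool" where "Zof v = fst (snd v)"
definition Tof :: "('d::finite) obs \<Rightarrow> real" where "Tof v = fst (snd (snd v))"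
definition Uof :: "('d::finite) obs \<Rightarrow> real" where "Uof v = snd (snd (snd v))"

definition zevent :: "bool \<Rightarrow> ((real^'d::finite) \<times> real \<times> real) set \<Rightarrow> 'd obs set" where
  "zevent z A = {v. Zof v = z \<and> (Xof v, Tof v, Uof v) \<in> A}"

definition meas_partition :: "(real^'d::finite) set set \<Rightarrow> (real^'d) set \<Rightarrow> bool" where
  "meas_partition P S \<longleftrightarrow> finite P \<and> (\<forall>a\<in>P. a \<in> sets borel \<and> a \<noteq> {}) \<and> disjoint P \<and> \<Union>P = S"

definition sample_space :: "nat \<Rightarrow> ('d::finite) obs measure \<Rightarrow> (nat \<Rightarrow> 'd obs) measure" where
  "sample_space n L = PiM {1..n} (\<lambda>_. L)"

text \<open>G^1: treated units i (Z^i = 1) that are matched, i.e. share a cell of the partition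
  with some control unit j (Z^j = 0).\<close>
definition matched_treated :: "(real^'d::finite) set set \<Rightarrow> nat \<Rightarrow> (nat \<Rightarrow> 'd obs) \<Rightarrow> nat set" where
  "matched_treated A n \<omega> =
     {i \<in> {1..n}. Zof (\<omega> i) \<and>
        (\<exists>j \<in> {1..n}. \<not> Zof (\<omega> j) \<and> (\<exists>a\<in>A. Xof (\<omega> i) \<in> a \<and> Xof (\<omega> j) \<in> a))}"

definition pinv :: "real \<Rightarrow> real" where "pinv x = (if x = 0 then 0 else 1 / x)"

definition conv_prob :: "(nat \<Rightarrow> 'a measure) \<Rightarrow> (nat \<Rightarrow> 'a \<Rightarrow> real) \<Rightarrow> real \<Rightarrow> bool" where
  "conv_prob M Y c \<longleftrightarrow>
     (\<forall>\<epsilon>>0. (\<lambda>n. measure (M n) {\<omega> \<in> space (M n). \<bar>Y n \<omega> - c\<bar> > \<epsilon>}) \<longlonglongrightarrow> 0)"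

end

theory Submission
  imports Defs
begin

definition xtu :: "'d::finite obs \<Rightarrow> (real^'d) \<times> real \<times> real" where
  "xtu v = (Xof v, Tof v, Uof v)"
lemma space_obsM[simp]: "space obsM = UNIV" by (simp add: obsM_def space_pair_measure)
lemma space_xtuM[simp]: "space xtuM = UNIV" by (simp add: xtuM_def space_pair_measure)
lemma meas_Xof[measurable]: "Xof \<in> borel_measurable obsM"
  unfolding Xof_def[abs_def] obsM_def by measurable
lemma meas_Zof[measurable]: "Zof \<in> measurable obsM (count_space UNIV)"
  unfolding Zof_def[abs_def] obsM_def by measurable
lemma pred_Zof[measurable]: "Measurable.pred obsM (\<lambda>v. Zof v)"
  by (rule meas_Zof)
lemma Collect_obsM: "Measurable.pred obsM P \<Longrightarrow> {v. P v} \<in> sets obsM"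
  using pred_def[where M=obsM and P=P] by simp
lemma meas_xtu[measurable]: "xtu \<in> measurable obsM xtuM"
  unfolding xtu_def[abs_def] Xof_def Tof_def Uof_def obsM_def xtuM_def by measurable
lemma meas_emb[measurable]: "(\<lambda>w. (fst w, True, snd w)) \<in> measurable xtuM obsM"
  unfolding obsM_def xtuM_def by measurable
lemma meas_phi[measurable]: "g \<in> borel_measurable obsM \<Longrightarrow> (\<lambda>w. g (fst w, True, snd w)) \<in> borel_measurable xtuM"
  by (rule measurable_compose[OF meas_emb])
lemma "Zof v \<Longrightarrow> g (fst (xtu v), True, snd (xtu v)) = g v"
  by (cases v) (auto simp: xtu_def Xof_def Zof_def Tof_def Uof_def)

locale mixsetup =
  fixes L :: "nat \<Rightarrow> ('d::finite) obs measure"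
    and Q :: "bool \<Rightarrow> ((real^'d) \<times> real \<times> real) measure"
    and p :: "nat \<Rightarrow> real"
  assumes Q_prob: "\<And>z. prob_space (Q z)" and Q_sets: "\<And>z. sets (Q z) = sets xtuM"
    and L_prob: "\<And>n. prob_space (L n)" and L_sets: "\<And>n. sets (L n) = sets obsM"
    and L_mix1: "\<And>n A. A \<in> sets xtuM \<Longrightarrow> measure (L n) (zevent True A) = p n * measure (Q True) A"
    and L_mix0: "\<And>n A. A \<in> sets xtuM \<Longrightarrow> measure (L n) (zevent False A) = (1 - p n) * measure (Q False) A"
begin

lemma space_L[simp]: "space (L n) = UNIV"
  using sets_eq_imp_space_eq[OF L_sets[of n]] by simp
lemma space_Q[simp]: "space (Q z) = UNIV"
  using sets_eq_imp_space_eq[OF Q_sets[of z]] by simp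
lemma meas_L_cong[measurable_cong]: "sets (L n) = sets obsM" by (rule L_sets)
lemma meas_Q_cong[measurable_cong]: "sets (Q z) = sets xtuM" by (rule Q_sets)

lemma p_nonneg: "0 \<le> p n"
proof -
  interpret Q1: prob_space "Q True" by (rule Q_prob)
  have "measure (L n) (zevent True UNIV) = p n"
    using L_mix1[of UNIV n] Q1.prob_space by (simp add: sets.top[of xtuM, simplified])
  then show ?thesis by (metis measure_nonneg)
qed

lemma zevent_eq: "zevent z A = {v. Zof v = z \<and> xtu v \<in> A}"
  by (simp add: zevent_def xtu_def)

lemma N_eq: "distr (density (L n) (\<lambda>v. ennreal (indicator {v. Zof v} v))) xtuM xtu
     = density (Q True) (\<lambda>_. ennreal (p n))"
proof (rule measure_eqI)
  show "sets (distr (density (L n) (\<lambda>v. ennreal (indicator {v. Zof v} v))) xtuM xtu) =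
    sets (density (Q True) (\<lambda>_. ennreal (p n)))" by (simp add: Q_sets)
next
  fix A assume "A \<in> sets (distr (density (L n) (\<lambda>v. ennreal (indicator {v. Zof v} v))) xtuM xtu)"
  then have A[measurable]: "A \<in> sets xtuM" by simp
  interpret Ln: prob_space "L n" by (rule L_prob)
  have ZA: "zevent True A \<in> sets (L n)" unfolding zevent_eq by (simp add: L_sets) (rule Collect_obsM, measurable)
  have XA: "xtu -` A \<in> sets (L n)" using measurable_sets[OF meas_xtu A] by (simp add: L_sets)
  have "emeasure (distr (density (L n) (\<lambda>v. ennreal (indicator {v. Zof v} v))) xtuM xtu) A
      = emeasure (density (L n) (\<lambda>v. ennreal (indicator {v. Zof v} v))) (xtu -` A)"
    by (subst emeasure_distr) (auto simp: measurable_cong_sets[OF refl L_sets])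
  also have "\<dots> = (\<integral>\<^sup>+ v. indicator (zevent True A) v \<partial>L n)"
    using XA by (subst emeasure_density) (auto intro!: nn_integral_cong simp: zevent_eq split: split_indicator)
  also have "\<dots> = emeasure (L n) (zevent True A)"
    using ZA by simp
  also have "\<dots> = ennreal (p n * measure (Q True) A)"
    using L_mix1[OF A] Ln.emeasure_eq_measure by simp
  also have "\<dots> = emeasure (density (Q True) (\<lambda>_. ennreal (p n))) A"
    using p_nonneg[of n] finite_measure.emeasure_eq_measure[OF prob_space.finite_measure[OF Q_prob]]
    by (subst emeasure_density_const) (auto simp: Q_sets ennreal_mult)
  finally show "emeasure (distr (density (L n) (\<lambda>v. ennreal (indicator {v. Zof v} v))) xtuM xtu) A =
         emeasure (density (Q True) (\<lambda>_. ennreal (p n))) A" .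
qed

lemma transfer_integral:
  fixes \<psi> :: "(real^'d) \<times> real \<times> real \<Rightarrow> real"
  assumes [measurable]: "\<psi> \<in> borel_measurable xtuM"
  shows "(\<integral>v. indicator {v. Zof v} v * \<psi> (xtu v) \<partial>L n) = p n * (\<integral>w. \<psi> w \<partial>Q True)"
proof -
  have "(\<integral>v. indicator {v. Zof v} v * \<psi> (xtu v) \<partial>L n)
     = (\<integral>v. \<psi> (xtu v) \<partial>density (L n) (\<lambda>v. ennreal (indicator {v. Zof v} v)))"
    by (subst integral_density) auto
  also have "\<dots> = (\<integral>w. \<psi> w \<partial>distr (density (L n) (\<lambda>v. ennreal (indicator {v. Zof v} v))) xtuM xtu)"
    by (subst integral_distr) auto
  also have "\<dots> = (\<integral>w. \<psi> w \<partial>density (Q True) (\<lambda>_. ennreal (p n)))"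
    by (simp add: N_eq)
  also have "\<dots> = p n * (\<integral>w. \<psi> w \<partial>Q True)"
    using p_nonneg[of n] by (subst integral_density) (auto)
  finally show ?thesis .
qed

lemma transfer_integrable:
  fixes \<psi> :: "(real^'d) \<times> real \<times> real \<Rightarrow> real"
  assumes [measurable]: "\<psi> \<in> borel_measurable xtuM" and int: "integrable (Q True) \<psi>"
  shows "integrable (L n) (\<lambda>v. indicator {v. Zof v} v * \<psi> (xtu v))"
proof -
  have "integrable (density (Q True) (\<lambda>_. ennreal (p n))) \<psi>"
    using p_nonneg[of n] int integrable_density[of \<psi> "Q True" "\<lambda>_. p n"] by auto
  then have "integrable (distr (density (L n) (\<lambda>v. ennreal (indicator {v. Zof v} v))) xtuM xtu) \<psi>"
    by (simp add: N_eq)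
  then have "integrable (density (L n) (\<lambda>v. ennreal (indicator {v. Zof v} v))) (\<lambda>v. \<psi> (xtu v))"
    by (subst (asm) integrable_distr_eq) auto
  then show ?thesis
    by (subst (asm) integrable_density) auto
qed

end

lemma PI_prod:
  fixes f :: "nat \<Rightarrow> 'a \<Rightarrow> real"
  assumes M: "prob_space M" and I: "finite I" and int: "\<And>k. k \<in> I \<Longrightarrow> integrable M (f k)"
  shows "integrable (PiM I (\<lambda>_. M)) (\<lambda>\<omega>. \<Prod>k\<in>I. f k (\<omega> k))"
    "(\<integral>\<omega>. (\<Prod>k\<in>I. f k (\<omega> k)) \<partial>PiM I (\<lambda>_. M)) = (\<Prod>k\<in>I. lebesgue_integral M (f k))"
proof -
  interpret M: prob_space M by (rule M)
  interpret product_sigma_finite "\<lambda>_::nat. M"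
    by (simp add: product_sigma_finite_def M.sigma_finite_measure_axioms)
  show "integrable (PiM I (\<lambda>_. M)) (\<lambda>\<omega>. \<Prod>k\<in>I. f k (\<omega> k))"
    by (rule product_integrable_prod[OF I int])
  show "(\<integral>\<omega>. (\<Prod>k\<in>I. f k (\<omega> k)) \<partial>PiM I (\<lambda>_. M)) = (\<Prod>k\<in>I. lebesgue_integral M (f k))"
    by (rule product_integral_prod[OF I int])
qed

lemma prod_if_single:
  fixes A B :: "'b \<Rightarrow> real"
  assumes "finite I" "i \<in> I"
  shows "(\<Prod>k\<in>I. (if k = i then A else B) (\<omega> k)) = A (\<omega> i) * (\<Prod>k\<in>I-{i}. B (\<omega> k))"
  using assms by (subst prod.remove[of I i]) auto

lemma PI1:
  fixes f :: "'a \<Rightarrow> real" and i :: nat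
  assumes M: "prob_space M" and I: "finite I" "i \<in> I" and int: "integrable M f"
  shows "integrable (PiM I (\<lambda>_. M)) (\<lambda>\<omega>. f (\<omega> i))"
    "(\<integral>\<omega>. f (\<omega> i) \<partial>PiM I (\<lambda>_. M)) = lebesgue_integral M f"
proof -
  interpret M: prob_space M by (rule M)
  define F where "F = (\<lambda>k::nat. if k = i then f else (\<lambda>_. 1::real))"
  have eq: "(\<Prod>k\<in>I. F k (\<omega> k)) = f (\<omega> i)" for \<omega>
    using prod_if_single[OF I, of f "\<lambda>_. 1" \<omega>] by (simp add: F_def)
  have intF: "\<And>k. k \<in> I \<Longrightarrow> integrable M (F k)" using int by (auto simp: F_def)
  show "integrable (PiM I (\<lambda>_. M)) (\<lambda>\<omega>. f (\<omega> i))"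
    using PI_prod(1)[OF M I(1), of F] intF by (simp add: eq)
  have "(\<Prod>k\<in>I. lebesgue_integral M (F k)) = lebesgue_integral M f"
    using I by (subst prod.remove[of I i]) (auto simp: F_def M.prob_space)
  then show "(\<integral>\<omega>. f (\<omega> i) \<partial>PiM I (\<lambda>_. M)) = lebesgue_integral M f"
    using PI_prod(2)[OF M I(1), of F] intF by (simp add: eq)
qed

lemma PI2:
  fixes f g :: "'a \<Rightarrow> real" and i j :: nat
  assumes M: "prob_space M" and I: "finite I" "i \<in> I" "j \<in> I" "i \<noteq> j"
    and int: "integrable M f" "integrable M g"
  shows "integrable (PiM I (\<lambda>_. M)) (\<lambda>\<omega>. f (\<omega> i) * g (\<omega> j))"
    "(\<integral>\<omega>. f (\<omega> i) * g (\<omega> j) \<partial>PiM I (\<lambda>_. M)) = lebesgue_integral M f * lebesgue_integral M g"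
proof -
  interpret M: prob_space M by (rule M)
  define F where "F = (\<lambda>k::nat. if k = i then f else if k = j then g else (\<lambda>_. 1::real))"
  have eq: "(\<Prod>k\<in>I. F k (\<omega> k)) = f (\<omega> i) * g (\<omega> j)" for \<omega>
  proof -
    have "(\<Prod>k\<in>I. F k (\<omega> k)) = F i (\<omega> i) * (\<Prod>k\<in>I-{i}. F k (\<omega> k))"
      using I by (subst prod.remove[of I i]) auto
    also have "(\<Prod>k\<in>I-{i}. F k (\<omega> k)) = F j (\<omega> j) * (\<Prod>k\<in>I-{i}-{j}. F k (\<omega> k))"
      using I by (subst prod.remove[of "I-{i}" j]) auto
    also have "(\<Prod>k\<in>I-{i}-{j}. F k (\<omega> k)) = 1"
      by (rule prod.neutral) (auto simp: F_def)
    finally show ?thesis using I by (simp add: F_def)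
  qed
  have intF: "\<And>k. k \<in> I \<Longrightarrow> integrable M (F k)" using int by (auto simp: F_def)
  show "integrable (PiM I (\<lambda>_. M)) (\<lambda>\<omega>. f (\<omega> i) * g (\<omega> j))"
    using PI_prod(1)[OF M I(1), of F] intF by (simp add: eq)
  have "(\<Prod>k\<in>I. lebesgue_integral M (F k)) = lebesgue_integral M (F i) * (\<Prod>k\<in>I-{i}. lebesgue_integral M (F k))"
    using I by (subst prod.remove[of I i]) auto
  also have "(\<Prod>k\<in>I-{i}. lebesgue_integral M (F k)) = lebesgue_integral M (F j) * (\<Prod>k\<in>I-{i}-{j}. lebesgue_integral M (F k))"
    using I by (subst prod.remove[of "I-{i}" j]) auto
  also have "(\<Prod>k\<in>I-{i}-{j}. lebesgue_integral M (F k)) = 1"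
    by (rule prod.neutral) (auto simp: F_def M.prob_space)
  finally have "(\<Prod>k\<in>I. lebesgue_integral M (F k)) = lebesgue_integral M f * lebesgue_integral M g"
    using I by (simp add: F_def M.prob_space)
  then show "(\<integral>\<omega>. f (\<omega> i) * g (\<omega> j) \<partial>PiM I (\<lambda>_. M)) = lebesgue_integral M f * lebesgue_integral M g"
    using PI_prod(2)[OF M I(1), of F] intF by (simp add: eq)
qed

lemma double_sum_int:
  fixes F :: "'i \<Rightarrow> 'i \<Rightarrow> 'a \<Rightarrow> real"
  assumes "\<And>i j. i \<in> I \<Longrightarrow> j \<in> I \<Longrightarrow> integrable M (F i j)"
  shows "integrable M (\<lambda>x. \<Sum>i\<in>I. \<Sum>j\<in>I. F i j x)"
    "integral\<^sup>L M (\<lambda>x. \<Sum>i\<in>I. \<Sum>j\<in>I. F i j x) = (\<Sum>i\<in>I. \<Sum>j\<in>I. integral\<^sup>L M (F i j))"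
proof -
  have inner: "integrable M (\<lambda>x. \<Sum>j\<in>I. F i j x)" "integral\<^sup>L M (\<lambda>x. \<Sum>j\<in>I. F i j x) = (\<Sum>j\<in>I. integral\<^sup>L M (F i j))" if "i \<in> I" for i
    using assms that Bochner_Integration.integral_sum[where I=I and M=M and f="\<lambda>j x. F i j x"] by auto
  show "integrable M (\<lambda>x. \<Sum>i\<in>I. \<Sum>j\<in>I. F i j x)"
    using inner(1) Bochner_Integration.integrable_sum[where I=I and M=M and f="\<lambda>i x. \<Sum>j\<in>I. F i j x"] by auto
  show "integral\<^sup>L M (\<lambda>x. \<Sum>i\<in>I. \<Sum>j\<in>I. F i j x) = (\<Sum>i\<in>I. \<Sum>j\<in>I. integral\<^sup>L M (F i j))"
    using inner Bochner_Integration.integral_sum[where I=I and M=M and f="\<lambda>i x. \<Sum>j\<in>I. F i j x"] by auto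
qed

lemma sum_second_moment:
  fixes h :: "'a \<Rightarrow> real" and I :: "nat set"
  assumes M: "prob_space M" and I: "finite I" and hm[measurable]: "h \<in> borel_measurable M"
    and h2: "integrable M (\<lambda>v. (h v)\<^sup>2)" and a: "0 < a"
  shows "measure (PiM I (\<lambda>_. M)) {\<omega>\<in>space (PiM I (\<lambda>_. M)).
           a \<le> \<bar>(\<Sum>i\<in>I. h (\<omega> i)) - real (card I) * lebesgue_integral M h\<bar>}
         \<le> real (card I) * lebesgue_integral M (\<lambda>v. (h v)\<^sup>2) / a\<^sup>2"
proof -
  interpret M: prob_space M by (rule M)
  let ?P = "PiM I (\<lambda>_. M)"
  interpret P: prob_space ?P by (intro prob_space_PiM M)
  define m where "m = lebesgue_integral M h"
  define d where "d = (\<lambda>v. h v - m)"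
  have hi: "integrable M h" using M.square_integrable_imp_integrable[OF hm h2] .
  have di: "integrable M d" unfolding d_def using hi by auto
  have d2eq: "(\<lambda>v. (d v)\<^sup>2) = (\<lambda>v. (h v)\<^sup>2 - 2 * m * h v + m\<^sup>2)"
    by (auto simp: d_def power2_eq_square algebra_simps)
  have d2i: "integrable M (\<lambda>v. (d v)\<^sup>2)" unfolding d2eq using hi h2 by auto
  have dint: "lebesgue_integral M d = 0" unfolding d_def m_def using hi M.prob_space by simp
  have d2int: "lebesgue_integral M (\<lambda>v. (d v)\<^sup>2) \<le> lebesgue_integral M (\<lambda>v. (h v)\<^sup>2)"
  proof -
    have "lebesgue_integral M (\<lambda>v. (d v)\<^sup>2) = lebesgue_integral M (\<lambda>v. (h v)\<^sup>2) - 2 * m * m + m\<^sup>2"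
      unfolding d2eq using hi h2 M.prob_space by (simp add: m_def)
    then show ?thesis by (simp add: power2_eq_square)
  qed
  define f where "f = (\<lambda>\<omega>. \<Sum>i\<in>I. d (\<omega> i))"
  have feq: "f \<omega> = (\<Sum>i\<in>I. h (\<omega> i)) - real (card I) * m" for \<omega>
    by (simp add: f_def d_def sum_subtractf)
  have f2eq: "(\<lambda>\<omega>. (f \<omega>)\<^sup>2) = (\<lambda>\<omega>. \<Sum>i\<in>I. \<Sum>j\<in>I. d (\<omega> i) * d (\<omega> j))"
    by (auto simp: f_def power2_eq_square sum_product)
  have termi: "integrable ?P (\<lambda>\<omega>. d (\<omega> i) * d (\<omega> j))
     \<and> (\<integral>\<omega>. d (\<omega> i) * d (\<omega> j) \<partial>?P) = (if i = j then lebesgue_integral M (\<lambda>v. (d v)\<^sup>2) else 0)"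
    if "i \<in> I" "j \<in> I" for i j
  proof (cases "i = j")
    case True
    then show ?thesis using PI1[OF M I \<open>i \<in> I\<close> d2i] by (simp add: power2_eq_square)
  next
    case False
    then show ?thesis using PI2[OF M I that False di di] dint by simp
  qed
  have f2i: "integrable ?P (\<lambda>\<omega>. (f \<omega>)\<^sup>2)"
    unfolding f2eq by (rule double_sum_int(1)) (use termi in blast)
  have f2int: "(\<integral>\<omega>. (f \<omega>)\<^sup>2 \<partial>?P) = real (card I) * lebesgue_integral M (\<lambda>v. (d v)\<^sup>2)"
  proof -
    have "(\<integral>\<omega>. (f \<omega>)\<^sup>2 \<partial>?P) = (\<Sum>i\<in>I. \<Sum>j\<in>I. (\<integral>\<omega>. d (\<omega> i) * d (\<omega> j) \<partial>?P))"
      unfolding f2eq by (rule double_sum_int(2)) (use termi in blast)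
    also have "\<dots> = (\<Sum>i\<in>I. \<Sum>j\<in>I. (if i = j then lebesgue_integral M (\<lambda>v. (d v)\<^sup>2) else 0))"
      using termi by (intro sum.cong) auto
    also have "\<dots> = real (card I) * lebesgue_integral M (\<lambda>v. (d v)\<^sup>2)"
      using I by (simp add: sum.delta)
    finally show ?thesis .
  qed
  have fm[measurable]: "f \<in> borel_measurable ?P" unfolding f_def d_def by measurable
  have "measure ?P {\<omega>\<in>space ?P. \<bar>f \<omega>\<bar> \<ge> a} \<le> (\<integral>\<omega>. (f \<omega>)\<^sup>2 \<partial>?P) / a\<^sup>2"
    by (rule P.second_moment_method[OF fm f2i a])
  also have "\<dots> \<le> real (card I) * lebesgue_integral M (\<lambda>v. (h v)\<^sup>2) / a\<^sup>2"
    unfolding f2int using d2int by (intro divide_right_mono mult_left_mono) auto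
  finally show ?thesis by (simp add: feq m_def)
qed

definition conv2 :: "(nat \<Rightarrow> 'a measure) \<Rightarrow> (nat \<Rightarrow> 'a \<Rightarrow> real) \<Rightarrow> real \<Rightarrow> bool" where
  "conv2 M Y c \<longleftrightarrow> (\<forall>\<epsilon>>0. \<exists>E. (\<forall>n. E n \<in> sets (M n)) \<and>
     eventually (\<lambda>n. {\<omega>\<in>space (M n). \<epsilon> < \<bar>Y n \<omega> - c\<bar>} \<subseteq> E n) sequentially \<and>
     (\<lambda>n. measure (M n) (E n)) \<longlonglongrightarrow> 0)"

lemma conv2_imp:
  assumes fin: "\<And>n. finite_measure (M n)" and c: "conv2 M Y c"
  shows "conv_prob M Y c"
  unfolding conv_prob_def
proof (intro allI impI)
  fix \<epsilon> :: real assume "0 < \<epsilon>"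
  then obtain E where E: "\<And>n. E n \<in> sets (M n)"
    "eventually (\<lambda>n. {\<omega>\<in>space (M n). \<epsilon> < \<bar>Y n \<omega> - c\<bar>} \<subseteq> E n) sequentially"
    "(\<lambda>n. measure (M n) (E n)) \<longlonglongrightarrow> 0"
    using c unfolding conv2_def by blast
  show "(\<lambda>n. measure (M n) {\<omega> \<in> space (M n). \<epsilon> < \<bar>Y n \<omega> - c\<bar>}) \<longlonglongrightarrow> 0"
  proof (rule tendsto_sandwich[OF _ _ tendsto_const E(3)])
    show "eventually (\<lambda>n. 0 \<le> measure (M n) {\<omega> \<in> space (M n). \<epsilon> < \<bar>Y n \<omega> - c\<bar>}) sequentially"
      by simp
    show "eventually (\<lambda>n. measure (M n) {\<omega> \<in> space (M n). \<epsilon> < \<bar>Y n \<omega> - c\<bar>} \<le> measure (M n) (E n)) sequentially"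
      using E(2) by eventually_elim (use fin E(1) finite_measure.finite_measure_mono in blast)
  qed
qed

lemma conv2_cong:
  assumes "conv2 M Y c" "eventually (\<lambda>n. \<forall>\<omega>\<in>space (M n). Y' n \<omega> = Y n \<omega>) sequentially"
  shows "conv2 M Y' c"
  unfolding conv2_def
proof (intro allI impI)
  fix \<epsilon> :: real assume "0 < \<epsilon>"
  then obtain E where E: "\<And>n. E n \<in> sets (M n)"
    "eventually (\<lambda>n. {\<omega>\<in>space (M n). \<epsilon> < \<bar>Y n \<omega> - c\<bar>} \<subseteq> E n) sequentially"
    "(\<lambda>n. measure (M n) (E n)) \<longlonglongrightarrow> 0"
    using assms(1) unfolding conv2_def by blast
  have "eventually (\<lambda>n. {\<omega>\<in>space (M n). \<epsilon> < \<bar>Y' n \<omega> - c\<bar>} \<subseteq> E n) sequentially"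
    using E(2) assms(2) by eventually_elim auto
  then show "\<exists>E. (\<forall>n. E n \<in> sets (M n)) \<and>
     eventually (\<lambda>n. {\<omega>\<in>space (M n). \<epsilon> < \<bar>Y' n \<omega> - c\<bar>} \<subseteq> E n) sequentially \<and>
     (\<lambda>n. measure (M n) (E n)) \<longlonglongrightarrow> 0" using E by blast
qed

lemma ratio_close:
  fixes a b x y \<epsilon> :: real
  assumes b: "0 < b" and e: "0 < \<epsilon>"
    and x: "\<bar>x - a\<bar> \<le> min (b/2) (\<epsilon> * b\<^sup>2 / (2 * (b + \<bar>a\<bar>)))"
    and y: "\<bar>y - b\<bar> \<le> min (b/2) (\<epsilon> * b\<^sup>2 / (2 * (b + \<bar>a\<bar>)))"
  shows "\<bar>x / y - a / b\<bar> \<le> \<epsilon>"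
proof -
  define \<delta> where "\<delta> = \<epsilon> * b\<^sup>2 / (2 * (b + \<bar>a\<bar>))"
  have ba: "0 < b + \<bar>a\<bar>" using b by linarith
  have "\<bar>y - b\<bar> \<le> b / 2" using y min.cobounded1 order_trans by blast
  then have "- (y - b) \<le> b / 2" by (rule abs_le_D2)
  then have y2: "b / 2 \<le> y" by linarith
  have ypos: "0 < y" using y2 b by linarith
  have xa: "\<bar>x - a\<bar> \<le> \<delta>" "\<bar>y - b\<bar> \<le> \<delta>" using x y by (auto simp: \<delta>_def)
  have eq: "x / y - a / b = ((x - a) * b - a * (y - b)) / (y * b)"
    using ypos b by (simp add: field_simps)
  have num: "\<bar>(x - a) * b - a * (y - b)\<bar> \<le> \<delta> * (b + \<bar>a\<bar>)"
  proof -
    have "\<bar>(x - a) * b - a * (y - b)\<bar> \<le> \<bar>(x - a) * b\<bar> + \<bar>a * (y - b)\<bar>"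
      by (rule abs_triangle_ineq4)
    also have "\<dots> = \<bar>x - a\<bar> * b + \<bar>a\<bar> * \<bar>y - b\<bar>"
      using b by (simp add: abs_mult)
    also have "\<dots> \<le> \<delta> * b + \<bar>a\<bar> * \<delta>"
      using xa b by (intro add_mono mult_right_mono mult_left_mono) auto
    finally show ?thesis by (simp add: algebra_simps)
  qed
  have dd: "\<delta> * (b + \<bar>a\<bar>) = \<epsilon> * b\<^sup>2 / 2" using ba by (simp add: \<delta>_def field_simps)
  have "b / 2 * b \<le> y * b" using y2 b by (intro mult_right_mono) auto
  then have den: "b\<^sup>2 / 2 \<le> y * b" by (simp add: power2_eq_square)
  have "\<bar>x / y - a / b\<bar> = \<bar>(x - a) * b - a * (y - b)\<bar> / (y * b)"
    using ypos b by (simp add: eq abs_div)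
  also have "\<dots> \<le> (\<epsilon> * b\<^sup>2 / 2) / (b\<^sup>2 / 2)"
    using num dd den ypos b e by (intro frac_le) (auto)
  also have "\<dots> = \<epsilon>" using b by (simp add: field_simps)
  finally show ?thesis .
qed

lemma conv2_ratio:
  assumes fin: "\<And>n. finite_measure (M n)" and A: "conv2 M A a" and B: "conv2 M B b" and b: "0 < b"
  shows "conv2 M (\<lambda>n \<omega>. A n \<omega> / B n \<omega>) (a / b)"
  unfolding conv2_def
proof (intro allI impI)
  fix \<epsilon> :: real assume e: "0 < \<epsilon>"
  define \<delta> where "\<delta> = min (b/2) (\<epsilon> * b\<^sup>2 / (2 * (b + \<bar>a\<bar>)))"
  have "0 < \<epsilon> * b\<^sup>2 / (2 * (b + \<bar>a\<bar>))"
    using b e by (intro divide_pos_pos mult_pos_pos) (auto intro: add_pos_nonneg)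
  then have dpos: "0 < \<delta>" using b unfolding \<delta>_def by simp
  obtain E1 where E1: "\<And>n. E1 n \<in> sets (M n)"
    "eventually (\<lambda>n. {\<omega>\<in>space (M n). \<delta> < \<bar>A n \<omega> - a\<bar>} \<subseteq> E1 n) sequentially"
    "(\<lambda>n. measure (M n) (E1 n)) \<longlonglongrightarrow> 0"
    using A dpos unfolding conv2_def by blast
  obtain E2 where E2: "\<And>n. E2 n \<in> sets (M n)"
    "eventually (\<lambda>n. {\<omega>\<in>space (M n). \<delta> < \<bar>B n \<omega> - b\<bar>} \<subseteq> E2 n) sequentially"
    "(\<lambda>n. measure (M n) (E2 n)) \<longlonglongrightarrow> 0"
    using B dpos unfolding conv2_def by blast
  have sets: "\<forall>n. E1 n \<union> E2 n \<in> sets (M n)" using E1(1) E2(1) by auto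
  have ev: "eventually (\<lambda>n. {\<omega>\<in>space (M n). \<epsilon> < \<bar>A n \<omega> / B n \<omega> - a / b\<bar>} \<subseteq> E1 n \<union> E2 n) sequentially"
    using E1(2) E2(2)
  proof eventually_elim
    case (elim n)
    show ?case
    proof
      fix \<omega> assume w: "\<omega> \<in> {\<omega>\<in>space (M n). \<epsilon> < \<bar>A n \<omega> / B n \<omega> - a / b\<bar>}"
      show "\<omega> \<in> E1 n \<union> E2 n"
      proof (rule ccontr)
        assume "\<omega> \<notin> E1 n \<union> E2 n"
        then have n1: "\<omega> \<notin> E1 n" and n2: "\<omega> \<notin> E2 n" by auto
        have ws: "\<omega> \<in> space (M n)" using w by simp
        have "\<not> \<delta> < \<bar>A n \<omega> - a\<bar>" using elim(1) n1 ws by blast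
        moreover have "\<not> \<delta> < \<bar>B n \<omega> - b\<bar>" using elim(2) n2 ws by blast
        ultimately have "\<bar>A n \<omega> - a\<bar> \<le> \<delta>" "\<bar>B n \<omega> - b\<bar> \<le> \<delta>" by auto
        then have "\<bar>A n \<omega> / B n \<omega> - a / b\<bar> \<le> \<epsilon>"
          unfolding \<delta>_def by (rule ratio_close[OF b e])
        then show False using w by simp
      qed
    qed
  qed
  have lim: "(\<lambda>n. measure (M n) (E1 n \<union> E2 n)) \<longlonglongrightarrow> 0"
  proof (rule tendsto_sandwich[OF _ _ tendsto_const])
    show "eventually (\<lambda>n. 0 \<le> measure (M n) (E1 n \<union> E2 n)) sequentially" by simp
    show "eventually (\<lambda>n. measure (M n) (E1 n \<union> E2 n) \<le> measure (M n) (E1 n) + measure (M n) (E2 n)) sequentially"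
      using E1(1) E2(1) by (intro always_eventually allI) (simp add: measure_Un_le)
    show "(\<lambda>n. measure (M n) (E1 n) + measure (M n) (E2 n)) \<longlonglongrightarrow> 0"
      using tendsto_add[OF E1(3) E2(3)] by simp
  qed
  show "\<exists>E. (\<forall>n. E n \<in> sets (M n)) \<and>
     eventually (\<lambda>n. {\<omega>\<in>space (M n). \<epsilon> < \<bar>A n \<omega> / B n \<omega> - a / b\<bar>} \<subseteq> E n) sequentially \<and>
     (\<lambda>n. measure (M n) (E n)) \<longlonglongrightarrow> 0"
    using sets ev lim by (intro exI[of _ "\<lambda>n. E1 n \<union> E2 n"]) simp
qed

lemma powr_neg_lim: "0 < s \<Longrightarrow> (\<lambda>n. real n powr (-s)) \<longlonglongrightarrow> 0"
  by (rule tendsto_neg_powr[OF _ filterlim_real_sequentially]) simp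

lemma exp_decay:
  fixes \<kappa> t :: real
  assumes k: "0 < \<kappa>" and t: "t < 1"
  shows "(\<lambda>n. exp (- ((real n - 1) * (\<kappa> * real n powr (-t))))) \<longlonglongrightarrow> 0"
proof (rule tendsto_sandwich[OF _ _ tendsto_const])
  show "eventually (\<lambda>n. 0 \<le> exp (- ((real n - 1) * (\<kappa> * real n powr (-t))))) sequentially" by simp
  have lim: "(\<lambda>n. (2 / \<kappa>) * real n powr (-(1 - t))) \<longlonglongrightarrow> 0"
    by (rule tendsto_mult_right_zero[OF powr_neg_lim]) (use t in simp)
  show "(\<lambda>n. (2 / \<kappa>) * real n powr (-(1 - t))) \<longlonglongrightarrow> 0" by (rule lim)
  show "eventually (\<lambda>n. exp (- ((real n - 1) * (\<kappa> * real n powr (-t)))) \<le> (2 / \<kappa>) * real n powr (-(1 - t))) sequentially"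
    using eventually_ge_at_top[of "2::nat"]
  proof eventually_elim
    case (elim n)
    then have n: "2 \<le> real n" by simp
    define x where "x = (real n - 1) * (\<kappa> * real n powr (-t))"
    have np: "0 < real n powr (-t)" using n by simp
    have eq1: "real n * real n powr (-t) = real n powr (1 - t)"
      using n by (simp add: powr_diff powr_minus divide_inverse)
    have xge: "\<kappa> / 2 * real n powr (1 - t) \<le> x"
    proof -
      have "\<kappa> / 2 * real n powr (1 - t) = (real n / 2) * (\<kappa> * real n powr (-t))"
        using eq1 by (simp add: algebra_simps)
      also have "\<dots> \<le> (real n - 1) * (\<kappa> * real n powr (-t))"
        using n np k by (intro mult_right_mono) auto
      finally show ?thesis by (simp add: x_def)
    qed
    have ppos: "0 < \<kappa> / 2 * real n powr (1 - t)" using n k by simp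
    have xpos: "0 < x" using xge ppos by linarith
    have xle: "x \<le> exp x" using exp_ge_add_one_self[of x] by linarith
    have "exp (-x) = 1 / exp x" by (simp add: exp_minus inverse_eq_divide)
    also have "\<dots> \<le> 1 / x"
      using xpos xle by (intro divide_left_mono) auto
    also have "\<dots> \<le> 1 / (\<kappa> / 2 * real n powr (1 - t))"
      using xge ppos by (intro divide_left_mono) auto
    also have "\<dots> = (2 / \<kappa>) * (1 / real n powr (1 - t))"
      using n k by simp
    also have "\<dots> = (2 / \<kappa>) * real n powr (-(1 - t))"
      by (simp only: powr_minus_divide)
    finally show ?case by (simp add: x_def)
  qed
qed

lemma inv_np_lim:
  fixes p :: "nat \<Rightarrow> real"
  assumes c: "0 < c" and b: "0 < \<beta>" and low: "\<And>n. 1 \<le> n \<Longrightarrow> c * real n powr (\<beta> - 1) \<le> p n"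
  shows "(\<lambda>n. 1 / (real n * p n)) \<longlonglongrightarrow> 0"
proof (rule tendsto_sandwich[OF _ _ tendsto_const])
  show "eventually (\<lambda>n. 0 \<le> 1 / (real n * p n)) sequentially"
    using eventually_ge_at_top[of "1::nat"]
  proof eventually_elim
    case (elim n) then show ?case using low[of n] c
      by (intro divide_nonneg_pos mult_pos_pos) (auto intro: less_le_trans[of 0 "c * real n powr (\<beta> - 1)"])
  qed
  show "(\<lambda>n. (1 / c) * real n powr (-\<beta>)) \<longlonglongrightarrow> 0"
    by (rule tendsto_mult_right_zero[OF powr_neg_lim[OF b]])
  show "eventually (\<lambda>n. 1 / (real n * p n) \<le> (1 / c) * real n powr (-\<beta>)) sequentially"
    using eventually_ge_at_top[of "1::nat"]
  proof eventually_elim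
    case (elim n)
    then have n: "1 \<le> real n" by simp
    have eq: "real n * (c * real n powr (\<beta> - 1)) = c * real n powr \<beta>"
      using n by (simp add: powr_diff field_simps)
    have pos: "0 < c * real n powr \<beta>" using c n by simp
    have "c * real n powr \<beta> \<le> real n * p n"
      using low[OF elim] n eq by (metis mult_left_mono of_nat_0_le_iff)
    then have "1 / (real n * p n) \<le> 1 / (c * real n powr \<beta>)"
      using pos by (intro divide_left_mono) auto
    also have "\<dots> = (1 / c) * real n powr (-\<beta>)" using c n by (simp add: powr_minus field_simps)
    finally show ?case .
  qed
qed

lemma p_small:
  fixes p :: "nat \<Rightarrow> real"
  assumes b: "\<beta> < 1" and up: "\<And>n. 1 \<le> n \<Longrightarrow> p n \<le> C * real n powr (\<beta> - 1)" and e: "0 < e"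
  shows "eventually (\<lambda>n. p n \<le> e) sequentially"
proof -
  have "(\<lambda>n. C * real n powr (-(1 - \<beta>))) \<longlonglongrightarrow> 0"
    by (rule tendsto_mult_right_zero[OF powr_neg_lim]) (use b in simp)
  then have "eventually (\<lambda>n. C * real n powr (-(1 - \<beta>)) < e) sequentially"
    using e by (simp add: order_tendsto_iff)
  then show ?thesis using eventually_ge_at_top[of "1::nat"]
    by eventually_elim (use up in force)
qed

lemma sum_indicator_le1:
  assumes "finite P" "disjoint P"
  shows "(\<Sum>a\<in>P. indicator a x) \<le> (1::real)"
proof (cases "\<exists>a\<in>P. x \<in> a")
  case True
  then obtain a0 where a0: "a0 \<in> P" "x \<in> a0" by blast
  have "(\<Sum>a\<in>P. indicator a x) = indicator a0 x + (\<Sum>a\<in>P-{a0}. indicator a x :: real)"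
    using assms(1) a0 by (subst sum.remove) auto
  also have "(\<Sum>a\<in>P-{a0}. indicator a x :: real) = 0"
  proof (rule sum.neutral, intro ballI)
    fix a assume "a \<in> P - {a0}"
    then have "a \<inter> a0 = {}" using assms(2) a0 unfolding disjoint_def by blast
    then show "indicator a x = (0::real)" using a0 by (auto simp: indicator_def)
  qed
  finally show ?thesis using a0 by simp
next
  case False
  then have "(\<Sum>a\<in>P. indicator a x :: real) = 0" by (intro sum.neutral) (auto simp: indicator_def)
  then show ?thesis by simp
qed

locale mainsetup = mixsetup L Q p
  for L :: "nat \<Rightarrow> ('d::finite) obs measure"
    and Q :: "bool \<Rightarrow> ((real^'d) \<times> real \<times> real) measure"
    and p :: "nat \<Rightarrow> real" +
  fixes \<nu> :: "(real^'d) measure"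
    and f :: "bool \<Rightarrow> real^'d \<Rightarrow> real"
    and m :: "real^'d \<Rightarrow> real"
    and \<X> :: "(real^'d) set"
    and \<A> :: "nat \<Rightarrow> (real^'d) set set"
    and \<beta> t :: real
  assumes A_part: "\<And>n. meas_partition (\<A> n) \<X>"
    and b0: "0 < \<beta>" and b1: "\<beta> < 1" and t1: "t < 1"
    and B2: "\<exists>c C. 0 < c \<and> (\<forall>n\<ge>1. c * real n powr (\<beta> - 1) \<le> p n \<and> p n \<le> C * real n powr (\<beta> - 1))"
    and nu_sets: "sets \<nu> = sets borel"
    and nu_X: "emeasure \<nu> \<X> < \<infinity>"
    and f_meas: "\<And>z. f z \<in> borel_measurable borel" and f_nonneg: "\<And>z x. 0 \<le> f z x"
    and f_dens: "\<And>z. distr (Q z) borel fst = density \<nu> (\<lambda>x. ennreal (f z x))"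
    and m_range: "\<And>x. 0 \<le> m x \<and> m x \<le> 1"
    and f0m_essinf: "\<exists>c>0. AE x in \<nu>. x \<in> \<X> \<longrightarrow> c \<le> f False x * m x"
    and B5_vol: "\<exists>c C. 0 < c \<and> (\<forall>n\<ge>1. \<forall>a\<in>\<A> n.
          c * real n powr (- t) \<le> measure \<nu> a \<and> measure \<nu> a \<le> C * real n powr (- t))"
begin

lemma cell_sub: "a \<in> \<A> n \<Longrightarrow> a \<subseteq> \<X>"
  using A_part[of n] unfolding meas_partition_def by blast
lemma cell_borel[measurable]: "a \<in> \<A> n \<Longrightarrow> a \<in> sets borel"
  using A_part[of n] unfolding meas_partition_def by blast
lemma cells_fin: "finite (\<A> n)"
  using A_part[of n] unfolding meas_partition_def by blast
lemma cells_disj: "disjoint (\<A> n)"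
  using A_part[of n] unfolding meas_partition_def by blast
lemma cells_Union: "\<Union>(\<A> n) = \<X>"
  using A_part[of n] unfolding meas_partition_def by blast
lemma X_borel[measurable]: "\<X> \<in> sets borel"
proof -
  have "\<Union>(\<A> 0) \<in> sets borel" using cells_fin[of 0] cell_borel[of _ 0] by (intro sets.finite_Union) auto
  then show ?thesis using cells_Union[of 0] by simp
qed

lemma setX_meas[measurable]: "B \<in> sets borel \<Longrightarrow> {w :: (real^'d) \<times> real \<times> real. fst w \<in> B} \<in> sets xtuM"
proof -
  assume [measurable]: "B \<in> sets borel"
  have "{w :: (real^'d) \<times> real \<times> real. fst w \<in> B} = fst -` B \<inter> space xtuM" by auto
  also have "\<dots> \<in> sets xtuM" unfolding xtuM_def by measurable
  finally show ?thesis .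
qed

lemma Q0_cell_lower:
  obtains \<kappa> where "0 < \<kappa>" "\<And>n a. 1 \<le> n \<Longrightarrow> a \<in> \<A> n \<Longrightarrow> \<kappa> * real n powr (-t) \<le> measure (Q False) {w. fst w \<in> a}"
proof -
  obtain c where c: "0 < c" "AE x in \<nu>. x \<in> \<X> \<longrightarrow> c \<le> f False x * m x" using f0m_essinf by blast
  obtain cv C where cv: "0 < cv" "\<And>n a. 1 \<le> n \<Longrightarrow> a \<in> \<A> n \<Longrightarrow> cv * real n powr (- t) \<le> measure \<nu> a"
    using B5_vol by blast
  have fc: "AE x in \<nu>. x \<in> \<X> \<longrightarrow> c \<le> f False x"
    using c(2)
  proof eventually_elim
    case (elim x)
    show ?case
    proof
      assume "x \<in> \<X>"
      then have "c \<le> f False x * m x" using elim by blast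
      also have "\<dots> \<le> f False x * 1" using m_range[of x] f_nonneg[of False x] by (intro mult_left_mono) auto
      finally show "c \<le> f False x" by simp
    qed
  qed
  have main: "c * (cv * real n powr (-t)) \<le> measure (Q False) {w. fst w \<in> a}" if n: "1 \<le> n" and a: "a \<in> \<A> n" for n a
  proof -
    interpret Q0: prob_space "Q False" by (rule Q_prob)
    have aB[measurable]: "a \<in> sets borel" using a by (rule cell_borel)
    have anu: "a \<in> sets \<nu>" using aB nu_sets by simp
    have afin: "emeasure \<nu> a < \<infinity>"
      using emeasure_mono[OF cell_sub[OF a], of \<nu>] nu_X nu_sets X_borel by (auto simp: le_less_trans)
    have "emeasure (Q False) {w. fst w \<in> a} = emeasure (distr (Q False) borel fst) a"
    proof -
      have "fst \<in> measurable (Q False) borel" by (simp add: measurable_cong_sets[OF Q_sets refl] xtuM_def)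
      then show ?thesis by (subst emeasure_distr) (auto simp: vimage_def)
    qed
    also have "\<dots> = (\<integral>\<^sup>+x. ennreal (f False x) * indicator a x \<partial>\<nu>)"
      unfolding f_dens using anu f_meas[of False] by (subst emeasure_density) (auto simp: measurable_cong_sets[OF nu_sets refl])
    also have "\<dots> \<ge> (\<integral>\<^sup>+x. ennreal c * indicator a x \<partial>\<nu>)"
      using fc cell_sub[OF a] by (intro nn_integral_mono_AE) (auto elim!: eventually_mono split: split_indicator intro: ennreal_leI)
    finally have "ennreal c * emeasure \<nu> a \<le> emeasure (Q False) {w. fst w \<in> a}"
      using anu by (simp add: nn_integral_cmult_indicator)
    then have "ennreal (c * measure \<nu> a) \<le> ennreal (measure (Q False) {w. fst w \<in> a})"
      using afin c(1) by (simp add: Q0.emeasure_eq_measure emeasure_eq_ennreal_measure ennreal_mult less_top[symmetric])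
    then have "c * measure \<nu> a \<le> measure (Q False) {w. fst w \<in> a}"
      by (rule ennreal_le_iff[THEN iffD1, OF measure_nonneg])
    moreover have "c * (cv * real n powr (-t)) \<le> c * measure \<nu> a"
      using cv(2)[OF n a] c(1) by simp
    ultimately show ?thesis by linarith
  qed
  show ?thesis by (rule that[of "c * cv"]) (use c(1) cv(1) main in \<open>auto simp: mult.assoc\<close>)
qed

end

context mainsetup begin
context
  fixes g :: "'d obs \<Rightarrow> real"
  assumes g_meas[measurable]: "g \<in> borel_measurable obsM"
    and g_L2: "integrable (Q True) (\<lambda>w. (g (fst w, True, snd w))\<^sup>2)"
begin

definition "phi w = g (fst w, True, snd w)"
definition psi :: "(real^'d) \<times> real \<times> real \<Rightarrow> real" where "psi w = indicator {w. fst w \<in> \<X>} w * phi w"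
definition hh :: "'d obs \<Rightarrow> real" where "hh v = indicator {v. Zof v} v * psi (xtu v)"
definition ua :: "(real^'d) set \<Rightarrow> 'd obs \<Rightarrow> real" where "ua a v = indicator {v. Zof v} v * (indicator {w. fst w \<in> a} (xtu v) * \<bar>phi (xtu v)\<bar>)"
definition ka :: "(real^'d) set \<Rightarrow> 'd obs \<Rightarrow> real" where "ka a v = indicator {v. \<not> Zof v \<and> Xof v \<in> a} v"
definition "Ia a = (\<integral>w. indicator {w. fst w \<in> a} w * \<bar>phi w\<bar> \<partial>Q True)"

lemma phi_meas[measurable]: "phi \<in> borel_measurable xtuM"
  unfolding phi_def[abs_def] by measurable
lemma psi_meas[measurable]: "psi \<in> borel_measurable xtuM"
  unfolding psi_def[abs_def] by measurable
lemma hh_meas[measurable]: "hh \<in> borel_measurable obsM"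
  unfolding hh_def[abs_def] by measurable
lemma ua_meas[measurable]: "a \<in> sets borel \<Longrightarrow> ua a \<in> borel_measurable obsM"
proof -
  assume a: "a \<in> sets borel"
  have [measurable]: "{w. fst w \<in> a} \<in> sets xtuM" using setX_meas[OF a] .
  show ?thesis unfolding ua_def[abs_def] by measurable
qed
lemma ka_meas[measurable]: "a \<in> sets borel \<Longrightarrow> ka a \<in> borel_measurable obsM"
proof -
  assume [measurable]: "a \<in> sets borel"
  have "{v. \<not> Zof v \<and> Xof v \<in> a} \<in> sets obsM" by (rule Collect_obsM) measurable
  then show ?thesis unfolding ka_def[abs_def] by measurable
qed

lemma phi2_int: "integrable (Q True) (\<lambda>w. (phi w)\<^sup>2)"
  using g_L2 by (simp add: phi_def)
lemma phi_int: "integrable (Q True) phi"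
proof -
  interpret Q1: prob_space "Q True" by (rule Q_prob)
  show ?thesis by (rule Q1.square_integrable_imp_integrable[OF _ phi2_int]) (simp add: measurable_cong_sets[OF Q_sets refl])
qed
lemma psi_int: "integrable (Q True) psi"
  unfolding psi_def using integrable_mult_indicator[OF _ phi_int, of "{w. fst w \<in> \<X>}"] Q_sets by simp
lemma psi2_eq: "(psi w)\<^sup>2 = indicator {w. fst w \<in> \<X>} w * (phi w)\<^sup>2"
  by (simp add: psi_def indicator_def power2_eq_square)
lemma psi2_int: "integrable (Q True) (\<lambda>w. (psi w)\<^sup>2)"
  unfolding psi2_eq using integrable_mult_indicator[OF _ phi2_int, of "{w. fst w \<in> \<X>}"] Q_sets by simp
lemma psi2_le: "(\<integral>w. (psi w)\<^sup>2 \<partial>Q True) \<le> (\<integral>w. (phi w)\<^sup>2 \<partial>Q True)"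
  using psi2_int phi2_int by (intro integral_mono) (auto simp: psi2_eq indicator_def)

lemma hh_eq: "hh v = (if Zof v \<and> Xof v \<in> \<X> then g v else 0)"
  by (cases v) (auto simp: hh_def psi_def phi_def xtu_def Xof_def Zof_def Tof_def Uof_def indicator_def)

lemma hh_L: "integrable (L n) hh" "(\<integral>v. hh v \<partial>L n) = p n * (\<integral>w. psi w \<partial>Q True)"
  unfolding hh_def[abs_def] using transfer_integrable[OF psi_meas psi_int] transfer_integral[OF psi_meas] by auto

lemma hh2_L: "integrable (L n) (\<lambda>v. (hh v)\<^sup>2)" "(\<integral>v. (hh v)\<^sup>2 \<partial>L n) = p n * (\<integral>w. (psi w)\<^sup>2 \<partial>Q True)"
proof -
  have eq: "(hh v)\<^sup>2 = indicator {v. Zof v} v * (psi (xtu v))\<^sup>2" for v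
    by (simp add: hh_def indicator_def power2_eq_square)
  have m2[measurable]: "(\<lambda>w. (psi w)\<^sup>2) \<in> borel_measurable xtuM" by measurable
  show "integrable (L n) (\<lambda>v. (hh v)\<^sup>2)" unfolding eq using transfer_integrable[OF m2 psi2_int] by simp
  show "(\<integral>v. (hh v)\<^sup>2 \<partial>L n) = p n * (\<integral>w. (psi w)\<^sup>2 \<partial>Q True)" unfolding eq using transfer_integral[OF m2] by simp
qed

lemma Ia_int: "a \<in> sets borel \<Longrightarrow> integrable (Q True) (\<lambda>w. indicator {w. fst w \<in> a} w * \<bar>phi w\<bar>)"
  using integrable_mult_indicator[OF _ integrable_abs[OF phi_int], of "{w. fst w \<in> a}"] Q_sets by simp

lemma ua_L: assumes a[measurable]: "a \<in> sets borel"
  shows "integrable (L n) (ua a)" "(\<integral>v. ua a v \<partial>L n) = p n * Ia a"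
proof -
  have m2[measurable]: "(\<lambda>w. indicator {w. fst w \<in> a} w * \<bar>phi w\<bar>) \<in> borel_measurable xtuM" by measurable
  show "integrable (L n) (ua a)" unfolding ua_def[abs_def] using transfer_integrable[OF m2 Ia_int[OF a]] by simp
  show "(\<integral>v. ua a v \<partial>L n) = p n * Ia a" unfolding ua_def[abs_def] Ia_def using transfer_integral[OF m2] by simp
qed

lemma ka_L: assumes a[measurable]: "a \<in> sets borel"
  shows "integrable (L n) (ka a)" "(\<integral>v. ka a v \<partial>L n) = (1 - p n) * measure (Q False) {w. fst w \<in> a}"
proof -
  interpret Ln: prob_space "L n" by (rule L_prob)
  have S: "{v. \<not> Zof v \<and> Xof v \<in> a} \<in> sets (L n)" by (simp add: L_sets) (rule Collect_obsM, measurable)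
  show "integrable (L n) (ka a)" unfolding ka_def[abs_def] using S
    by (intro integrable_real_indicator) (auto simp: less_top[symmetric])
  have "zevent False {w. fst w \<in> a} = {v. \<not> Zof v \<and> Xof v \<in> a}" by (auto simp: zevent_def)
  then show "(\<integral>v. ka a v \<partial>L n) = (1 - p n) * measure (Q False) {w. fst w \<in> a}"
    unfolding ka_def[abs_def] using S L_mix0[OF setX_meas[OF a], of n] by simp
qed

lemma Ia_nonneg: "0 \<le> Ia a" unfolding Ia_def by (intro integral_nonneg_AE) auto

lemma sum_Ia: "(\<Sum>a\<in>\<A> n. Ia a) \<le> (\<integral>w. \<bar>phi w\<bar> \<partial>Q True)"
proof -
  have "(\<Sum>a\<in>\<A> n. Ia a) = (\<integral>w. (\<Sum>a\<in>\<A> n. indicator {w. fst w \<in> a} w * \<bar>phi w\<bar>) \<partial>Q True)"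
    unfolding Ia_def using Ia_int[OF cell_borel] by (subst Bochner_Integration.integral_sum) auto
  also have "\<dots> \<le> (\<integral>w. \<bar>phi w\<bar> \<partial>Q True)"
  proof (rule integral_mono)
    show "integrable (Q True) (\<lambda>w. \<Sum>a\<in>\<A> n. indicator {w. fst w \<in> a} w * \<bar>phi w\<bar>)"
      using Ia_int[OF cell_borel] by (intro Bochner_Integration.integrable_sum) auto
    show "integrable (Q True) (\<lambda>w. \<bar>phi w\<bar>)" using phi_int by auto
    fix w
    have "(\<Sum>a\<in>\<A> n. indicator {w. fst w \<in> a} w * \<bar>phi w\<bar>) = (\<Sum>a\<in>\<A> n. indicator a (fst w)) * \<bar>phi w\<bar>"
      by (simp add: sum_distrib_right indicator_def)
    also have "\<dots> \<le> 1 * \<bar>phi w\<bar>"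
      using sum_indicator_le1[OF cells_fin cells_disj] by (intro mult_right_mono) auto
    finally show "(\<Sum>a\<in>\<A> n. indicator {w. fst w \<in> a} w * \<bar>phi w\<bar>) \<le> \<bar>phi w\<bar>" by simp
  qed
  finally show ?thesis .
qed

end
end

context mainsetup begin
context
  fixes g :: "'d obs \<Rightarrow> real"
  assumes g_meas[measurable]: "g \<in> borel_measurable obsM"
    and g_L2: "integrable (Q True) (\<lambda>w. (g (fst w, True, snd w))\<^sup>2)"
begin

lemmas phi_def' = phi_def[OF g_meas g_L2]
lemmas ua_def' = ua_def[OF g_meas g_L2]
lemmas ka_def' = ka_def[OF g_meas g_L2]

definition Sn :: "nat \<Rightarrow> (nat \<Rightarrow> 'd obs) \<Rightarrow> real" where
  "Sn n \<omega> = (\<Sum>i\<in>{1..n}. hh g (\<omega> i))"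
definition Rterm :: "nat \<Rightarrow> (real^'d) set \<Rightarrow> nat \<Rightarrow> (nat \<Rightarrow> 'd obs) \<Rightarrow> real" where
  "Rterm n a i \<omega> = (\<Prod>k\<in>{1..n}. (if k = i then ua g a else (\<lambda>v. 1 - ka a v)) (\<omega> k))"
definition Rn :: "nat \<Rightarrow> (nat \<Rightarrow> 'd obs) \<Rightarrow> real" where
  "Rn n \<omega> = (\<Sum>i\<in>{1..n}. \<Sum>a\<in>\<A> n. Rterm n a i \<omega>)"

lemma phi_xtu: "Zof v \<Longrightarrow> phi g (xtu v) = g v"
  by (cases v) (auto simp: phi_def' xtu_def Xof_def Zof_def Tof_def Uof_def)
lemma fst_xtu: "fst (xtu v) = Xof v" by (simp add: xtu_def)

lemma ua_nonneg: "0 \<le> ua g a v" by (simp add: ua_def')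
lemma ka_01: "0 \<le> 1 - ka a v" by (simp add: ka_def' indicator_def)

lemma ka_le1: "ka a v \<le> 1" by (simp add: ka_def' indicator_def)

lemma Rterm_nonneg: "0 \<le> Rterm n a i \<omega>"
  unfolding Rterm_def by (intro prod_nonneg) (auto simp: ua_nonneg ka_le1)

lemma PW: "\<bar>(\<Sum>i\<in>matched_treated (\<A> n) n \<omega>. g (\<omega> i)) - Sn n \<omega>\<bar> \<le> Rn n \<omega>"
proof -
  define I where "I = {1..n}"
  define MT where "MT = matched_treated (\<A> n) n \<omega>"
  define T where "T = {i\<in>I. Zof (\<omega> i) \<and> Xof (\<omega> i) \<in> \<X>}"
  have fI: "finite I" by (simp add: I_def)
  have MT_T: "MT \<subseteq> T"
    unfolding MT_def T_def matched_treated_def I_def using cell_sub by blast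
  have fT: "finite T" using fI by (simp add: T_def)
  have "Sn n \<omega> = (\<Sum>i\<in>I. if Zof (\<omega> i) \<and> Xof (\<omega> i) \<in> \<X> then g (\<omega> i) else 0)"
    by (simp add: Sn_def I_def hh_eq[OF g_meas g_L2])
  also have "\<dots> = (\<Sum>i\<in>T. g (\<omega> i))"
    unfolding T_def by (simp add: sum.inter_filter[OF fI])
  also have "\<dots> = (\<Sum>i\<in>MT. g (\<omega> i)) + (\<Sum>i\<in>T - MT. g (\<omega> i))"
    using sum.subset_diff[OF MT_T fT, of "\<lambda>i. g (\<omega> i)"] by (simp add: add.commute)
  finally have "\<bar>(\<Sum>i\<in>MT. g (\<omega> i)) - Sn n \<omega>\<bar> = \<bar>\<Sum>i\<in>T - MT. g (\<omega> i)\<bar>" by simp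
  also have "\<dots> \<le> (\<Sum>i\<in>T - MT. \<bar>g (\<omega> i)\<bar>)" by (rule sum_abs)
  also have "\<dots> \<le> (\<Sum>i\<in>T - MT. \<Sum>a\<in>\<A> n. Rterm n a i \<omega>)"
  proof (rule sum_mono)
    fix i assume i: "i \<in> T - MT"
    then have iI: "i \<in> I" and Zi: "Zof (\<omega> i)" and Xi: "Xof (\<omega> i) \<in> \<X>" by (auto simp: T_def)
    obtain a where a: "a \<in> \<A> n" "Xof (\<omega> i) \<in> a" using Xi cells_Union[of n] by blast
    have nomatch: "\<not> (\<exists>j\<in>{1..n}. \<not> Zof (\<omega> j) \<and> (\<exists>a\<in>\<A> n. Xof (\<omega> i) \<in> a \<and> Xof (\<omega> j) \<in> a))"
      using i iI Zi unfolding MT_def matched_treated_def I_def T_def by blast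
    have k0: "ka a (\<omega> j) = 0" if "j \<in> I" for j
      using nomatch that a unfolding ka_def' I_def by (auto simp: indicator_def)
    have "Rterm n a i \<omega> = ua g a (\<omega> i) * (\<Prod>k\<in>I-{i}. 1 - ka a (\<omega> k))"
      unfolding Rterm_def I_def[symmetric] using prod_if_single[OF fI iI, of "ua g a" "\<lambda>v. 1 - ka a v" \<omega>] by simp
    also have "(\<Prod>k\<in>I-{i}. 1 - ka a (\<omega> k)) = 1"
      using k0 by (intro prod.neutral) auto
    also have "ua g a (\<omega> i) = \<bar>g (\<omega> i)\<bar>"
      using Zi a(2) by (simp add: ua_def' phi_xtu fst_xtu)
    finally have "\<bar>g (\<omega> i)\<bar> = Rterm n a i \<omega>" by simp
    also have "\<dots> \<le> (\<Sum>a\<in>\<A> n. Rterm n a i \<omega>)"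
      using a(1) cells_fin Rterm_nonneg by (intro member_le_sum) auto
    finally show "\<bar>g (\<omega> i)\<bar> \<le> (\<Sum>a\<in>\<A> n. Rterm n a i \<omega>)" .
  qed
  also have "\<dots> \<le> (\<Sum>i\<in>I. \<Sum>a\<in>\<A> n. Rterm n a i \<omega>)"
    using fI by (intro sum_mono2) (auto simp: T_def intro: sum_nonneg Rterm_nonneg)
  finally show ?thesis by (simp add: MT_def Rn_def I_def)
qed

lemma ER:
  shows "integrable (sample_space n (L n)) (Rn n)"
    "(\<integral>\<omega>. Rn n \<omega> \<partial>sample_space n (L n)) =
      (\<Sum>i\<in>{1..n}. \<Sum>a\<in>\<A> n. p n * Ia g a * (1 - (1 - p n) * measure (Q False) {w. fst w \<in> a}) ^ (n - 1))"
proof -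
  let ?P = "PiM {1..n} (\<lambda>_. L n)"
  have each: "integrable ?P (Rterm n a i) \<and> (\<integral>\<omega>. Rterm n a i \<omega> \<partial>?P) =
      p n * Ia g a * (1 - (1 - p n) * measure (Q False) {w. fst w \<in> a}) ^ (n - 1)"
    if i: "i \<in> {1..n}" and a: "a \<in> \<A> n" for i a
  proof -
    interpret Ln: prob_space "L n" by (rule L_prob)
    have aB[measurable]: "a \<in> sets borel" using a by (rule cell_borel)
    define F where "F = (\<lambda>k. if k = i then ua g a else (\<lambda>v. 1 - ka a v))"
    have intF: "integrable (L n) (F k)" for k
      using ua_L(1)[OF g_meas g_L2 aB] ka_L(1)[OF g_meas g_L2 aB] by (auto simp: F_def)
    have R_eq: "Rterm n a i = (\<lambda>\<omega>. \<Prod>k\<in>{1..n}. F k (\<omega> k))"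
      by (simp add: Rterm_def F_def fun_eq_iff)
    have "(\<Prod>k\<in>{1..n}. lebesgue_integral (L n) (F k)) =
        lebesgue_integral (L n) (F i) * (\<Prod>k\<in>{1..n}-{i}. lebesgue_integral (L n) (F k))"
      using i by (subst prod.remove[of "{1..n}" i]) auto
    also have "(\<Prod>k\<in>{1..n}-{i}. lebesgue_integral (L n) (F k)) =
        (\<Prod>k\<in>{1..n}-{i}. 1 - (1 - p n) * measure (Q False) {w. fst w \<in> a})"
      using ka_L[OF g_meas g_L2 aB, of n] Ln.prob_space by (intro prod.cong) (auto simp: F_def)
    also have "\<dots> = (1 - (1 - p n) * measure (Q False) {w. fst w \<in> a}) ^ (n - 1)"
      using i by simp
    also have "lebesgue_integral (L n) (F i) = p n * Ia g a"
      using ua_L(2)[OF g_meas g_L2 aB] by (simp add: F_def)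
    finally have "(\<Prod>k\<in>{1..n}. lebesgue_integral (L n) (F k)) =
        p n * Ia g a * (1 - (1 - p n) * measure (Q False) {w. fst w \<in> a}) ^ (n - 1)" .
    then show ?thesis
      unfolding R_eq using PI_prod[OF L_prob, where I="{1..n}" and f=F] intF by simp
  qed
  have Rn_eq: "Rn n = (\<lambda>\<omega>. \<Sum>i\<in>{1..n}. \<Sum>a\<in>\<A> n. Rterm n a i \<omega>)" by (simp add: Rn_def fun_eq_iff)
  have int_inner: "integrable ?P (\<lambda>\<omega>. \<Sum>a\<in>\<A> n. Rterm n a i \<omega>) \<and>
     (\<integral>\<omega>. (\<Sum>a\<in>\<A> n. Rterm n a i \<omega>) \<partial>?P) = (\<Sum>a\<in>\<A> n. p n * Ia g a * (1 - (1 - p n) * measure (Q False) {w. fst w \<in> a}) ^ (n - 1))"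
    if i: "i \<in> {1..n}" for i
    using each[OF i] Bochner_Integration.integral_sum[where I="\<A> n" and M="?P" and f="\<lambda>a \<omega>. Rterm n a i \<omega>"]
      Bochner_Integration.integrable_sum[where I="\<A> n" and M="?P" and f="\<lambda>a \<omega>. Rterm n a i \<omega>"] by auto
  show "integrable (sample_space n (L n)) (Rn n)"
    unfolding sample_space_def Rn_eq
    using int_inner Bochner_Integration.integrable_sum[where I="{1..n}" and M="?P" and f="\<lambda>i \<omega>. \<Sum>a\<in>\<A> n. Rterm n a i \<omega>"] by auto
  show "(\<integral>\<omega>. Rn n \<omega> \<partial>sample_space n (L n)) =
      (\<Sum>i\<in>{1..n}. \<Sum>a\<in>\<A> n. p n * Ia g a * (1 - (1 - p n) * measure (Q False) {w. fst w \<in> a}) ^ (n - 1))"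
    unfolding sample_space_def Rn_eq
    using int_inner Bochner_Integration.integral_sum[where I="{1..n}" and M="?P" and f="\<lambda>i \<omega>. \<Sum>a\<in>\<A> n. Rterm n a i \<omega>"] by auto
qed

end
end

lemma pow_exp_bound:
  fixes q :: real
  assumes "0 \<le> q" "q \<le> 1"
  shows "(1 - q) ^ k \<le> exp (- (real k * q))"
proof -
  have "(1 - q) ^ k \<le> exp (-q) ^ k"
    using assms exp_ge_add_one_self[of "-q"] by (intro power_mono) auto
  also have "\<dots> = exp (- (real k * q))" by (simp add: exp_of_nat_mult[symmetric])
  finally show ?thesis .
qed

lemma aux_div: "0 < (x::real) \<Longrightarrow> (1 / x) * M - \<mu> = (M - x * \<mu>) / x"
  by (simp add: field_simps)

context mainsetup begin

lemma p_bounds: obtains c0 C0 where "0 < c0" "\<And>n. 1 \<le> n \<Longrightarrow> c0 * real n powr (\<beta> - 1) \<le> p n"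
  "\<And>n. 1 \<le> n \<Longrightarrow> p n \<le> C0 * real n powr (\<beta> - 1)"
proof -
  obtain c C where cC: "0 < c" "\<forall>n\<ge>1. c * real n powr (\<beta> - 1) \<le> p n \<and> p n \<le> C * real n powr (\<beta> - 1)"
    using B2 by blast
  show ?thesis by (rule that[of c C]) (use cC in auto)
qed

lemma p_pos: "1 \<le> n \<Longrightarrow> 0 < p n"
proof -
  assume n: "1 \<le> n"
  obtain c0 C0 where c0: "0 < c0" "\<And>n. 1 \<le> n \<Longrightarrow> c0 * real n powr (\<beta> - 1) \<le> p n" by (metis p_bounds)
  have "0 < c0 * real n powr (\<beta> - 1)" using c0(1) n by simp
  then show ?thesis using c0(2)[OF n] by linarith
qed

context
  fixes g :: "'d obs \<Rightarrow> real"
  assumes g_meas[measurable]: "g \<in> borel_measurable obsM"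
    and g_L2: "integrable (Q True) (\<lambda>w. (g (fst w, True, snd w))\<^sup>2)"
begin

lemma claim1:
  "conv2 (\<lambda>n. sample_space n (L n))
     (\<lambda>n \<omega>. (1 / (real n * p n)) * (\<Sum>i\<in>matched_treated (\<A> n) n \<omega>. g (\<omega> i)))
     (\<integral>w. psi g w \<partial>Q True)"
  unfolding conv2_def
proof (intro allI impI)
  fix \<epsilon> :: real assume e: "0 < \<epsilon>"
  obtain c0 C0 where c0: "0 < c0" "\<And>n. 1 \<le> n \<Longrightarrow> c0 * real n powr (\<beta> - 1) \<le> p n"
    and C0: "\<And>n. 1 \<le> n \<Longrightarrow> p n \<le> C0 * real n powr (\<beta> - 1)" by (metis p_bounds)
  obtain \<kappa> where k: "0 < \<kappa>" "\<And>n a. 1 \<le> n \<Longrightarrow> a \<in> \<A> n \<Longrightarrow> \<kappa> * real n powr (-t) \<le> measure (Q False) {w. fst w \<in> a}"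
    using Q0_cell_lower by blast
  define \<mu> where "\<mu> = (\<integral>w. psi g w \<partial>Q True)"
  define K where "K = (\<integral>w. (phi g w)\<^sup>2 \<partial>Q True)"
  define J where "J = (\<integral>w. \<bar>phi g w\<bar> \<partial>Q True)"
  define \<rho> where "\<rho> = (\<lambda>n::nat. exp (- ((real n - 1) * ((\<kappa> / 2) * real n powr (-t)))))"
  define E1 where "E1 = (\<lambda>n. {\<omega>\<in>space (sample_space n (L n)). \<epsilon> * real n * p n / 2 \<le>
      \<bar>(\<Sum>i\<in>{1..n}. hh g (\<omega> i)) - real (card {1..n}) * lebesgue_integral (L n) (hh g)\<bar>})"
  define E2 where "E2 = (\<lambda>n. {\<omega>\<in>space (sample_space n (L n)). \<epsilon> * real n * p n / 2 \<le> Rn g n \<omega>})"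
  have hhm[measurable]: "hh g \<in> borel_measurable (L n)" for n
    using hh_meas[OF g_meas g_L2] by (simp add: measurable_cong_sets[OF L_sets refl])
  have Sm: "(\<lambda>\<omega>. \<Sum>i\<in>{1..n}. hh g (\<omega> i)) \<in> borel_measurable (sample_space n (L n))" for n
    unfolding sample_space_def
  proof (rule borel_measurable_sum)
    fix i assume i: "i \<in> {1..n}"
    show "(\<lambda>\<omega>. hh g (\<omega> i)) \<in> borel_measurable (PiM {1..n} (\<lambda>_. L n))"
      using measurable_compose[OF measurable_component_singleton[OF i, of "\<lambda>_. L n"] hhm[of n]] by simp
  qed
  have Sm2: "(\<lambda>\<omega>. \<bar>(\<Sum>i\<in>{1..n}. hh g (\<omega> i)) - real (card {1..n}) * lebesgue_integral (L n) (hh g)\<bar>)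
     \<in> borel_measurable (sample_space n (L n))" for n
    using Sm[of n] by (intro borel_measurable_abs borel_measurable_diff) auto
  have E1_sets: "E1 n \<in> sets (sample_space n (L n))" for n
    unfolding E1_def using Sm2[of n] by (rule borel_measurable_le[OF borel_measurable_const]) 

  have Rnm[measurable]: "Rn g n \<in> borel_measurable (sample_space n (L n))" for n
    using ER(1)[OF g_meas g_L2, where n=n] by (rule borel_measurable_integrable)
  have E2_sets: "E2 n \<in> sets (sample_space n (L n))" for n
    unfolding E2_def using Rnm[of n] by (rule borel_measurable_le[OF borel_measurable_const])
  have sets: "\<forall>n. E1 n \<union> E2 n \<in> sets (sample_space n (L n))" using E1_sets E2_sets by auto
  have evp: "eventually (\<lambda>n. p n \<le> 1/2) sequentially"
    by (rule p_small[OF b1 C0]) auto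
  have ev1: "eventually (\<lambda>n. 1 \<le> n) sequentially" by (rule eventually_ge_at_top)
  have incl: "eventually (\<lambda>n. {\<omega>\<in>space (sample_space n (L n)). \<epsilon> < \<bar>(1 / (real n * p n)) * (\<Sum>i\<in>matched_treated (\<A> n) n \<omega>. g (\<omega> i)) - \<mu>\<bar>}
       \<subseteq> E1 n \<union> E2 n) sequentially"
    using ev1
  proof eventually_elim
    case (elim n)
    have np: "0 < real n * p n" using elim p_pos[OF elim] by simp
    show ?case
    proof
      fix \<omega> assume w: "\<omega> \<in> {\<omega>\<in>space (sample_space n (L n)). \<epsilon> < \<bar>(1 / (real n * p n)) * (\<Sum>i\<in>matched_treated (\<A> n) n \<omega>. g (\<omega> i)) - \<mu>\<bar>}"
      show "\<omega> \<in> E1 n \<union> E2 n"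
      proof (rule ccontr)
        assume "\<omega> \<notin> E1 n \<union> E2 n"
        then have a1: "\<bar>Sn g n \<omega> - real n * p n * \<mu>\<bar> < \<epsilon> * real n * p n / 2"
          and a2: "Rn g n \<omega> < \<epsilon> * real n * p n / 2"
          using w hh_L(2)[OF g_meas g_L2, where n=n] by (auto simp: E1_def E2_def Sn_def[OF g_meas g_L2] \<mu>_def not_le mult.assoc)
        define M where "M = (\<Sum>i\<in>matched_treated (\<A> n) n \<omega>. g (\<omega> i))"
        have "\<bar>M - real n * p n * \<mu>\<bar> \<le> \<bar>M - Sn g n \<omega>\<bar> + \<bar>Sn g n \<omega> - real n * p n * \<mu>\<bar>" by linarith
        also have "\<dots> < \<epsilon> * (real n * p n)"
          using PW[OF g_meas g_L2, where n=n and \<omega>=\<omega>] a1 a2 by (simp add: M_def)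
        finally have lt: "\<bar>M - real n * p n * \<mu>\<bar> < \<epsilon> * (real n * p n)" .
        have eq: "(1 / (real n * p n)) * M - \<mu> = (M - real n * p n * \<mu>) / (real n * p n)"
          using aux_div[OF np] .
        have "\<bar>(1 / (real n * p n)) * M - \<mu>\<bar> = \<bar>M - real n * p n * \<mu>\<bar> / (real n * p n)"
          unfolding eq abs_divide using np by simp
        also have "\<dots> < \<epsilon>" using lt pos_divide_less_eq[OF np] by simp
        finally show False using w by (simp add: M_def)
      qed
    qed
  qed
  have K_nonneg: "0 \<le> K" unfolding K_def by (intro integral_nonneg_AE) auto
  have J_nonneg: "0 \<le> J" unfolding J_def by (intro integral_nonneg_AE) auto
  have bnd1: "measure (sample_space n (L n)) (E1 n) \<le> (4 * K / \<epsilon>\<^sup>2) * (1 / (real n * p n))" if n: "1 \<le> n" for n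
  proof -
    define x where "x = real n * p n"
    have np: "0 < x" using n p_pos[OF n] by (simp add: x_def)
    have ax: "\<epsilon> * real n * p n / 2 = \<epsilon> * x / 2" by (simp add: x_def mult.assoc)
    have a: "0 < \<epsilon> * real n * p n / 2" unfolding ax using np e by simp
    have "measure (sample_space n (L n)) (E1 n) \<le> real (card {1..n}) * lebesgue_integral (L n) (\<lambda>v. (hh g v)\<^sup>2) / (\<epsilon> * real n * p n / 2)\<^sup>2"
      unfolding E1_def sample_space_def by (rule sum_second_moment[OF L_prob _ hhm hh2_L(1)[OF g_meas g_L2] a]) simp
    also have "\<dots> = x * (\<integral>w. (psi g w)\<^sup>2 \<partial>Q True) / (\<epsilon> * x / 2)\<^sup>2"
      using hh2_L(2)[OF g_meas g_L2, where n=n] unfolding ax by (simp add: x_def mult.assoc)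
    also have "\<dots> \<le> x * K / (\<epsilon> * x / 2)\<^sup>2"
      using psi2_le[OF g_meas g_L2] np unfolding K_def
      by (intro divide_right_mono mult_left_mono) auto
    also have "\<dots> = (4 * K / \<epsilon>\<^sup>2) * (1 / x)"
      using np e by (simp add: power2_eq_square field_simps)
    finally show ?thesis by (simp add: x_def)
  qed
  have bnd2: "measure (sample_space n (L n)) (E2 n) \<le> (2 * J / \<epsilon>) * \<rho> n" if n: "1 \<le> n" and pn: "p n \<le> 1/2" for n
  proof -
    have np: "0 < real n * p n" using n p_pos[OF n] by simp
    have a: "0 < \<epsilon> * real n * p n / 2" using np e by (simp add: mult.assoc)
    have qb: "(1 - (1 - p n) * measure (Q False) {w. fst w \<in> a}) ^ (n - 1) \<le> \<rho> n" if a: "a \<in> \<A> n" for a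
    proof -
      interpret Q0: prob_space "Q False" by (rule Q_prob)
      define q where "q = (1 - p n) * measure (Q False) {w. fst w \<in> a}"
      have Qa: "measure (Q False) {w. fst w \<in> a} \<le> 1" by (rule Q0.prob_le_1)
      have q0: "0 \<le> q" using pn unfolding q_def by simp
      have q1: "q \<le> 1" unfolding q_def using p_pos[OF n] pn Qa by (intro mult_le_one) auto
      have qk: "(\<kappa> / 2) * real n powr (-t) \<le> q"
      proof -
        have "(\<kappa> / 2) * real n powr (-t) = (1/2) * (\<kappa> * real n powr (-t))" by simp
        also have "\<dots> \<le> (1 - p n) * measure (Q False) {w. fst w \<in> a}"
          using k(2)[OF n a] pn k(1) by (intro mult_mono) auto
        finally show ?thesis by (simp add: q_def)
      qed
      have "(1 - q) ^ (n - 1) \<le> exp (- (real (n - 1) * q))" by (rule pow_exp_bound[OF q0 q1])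
      also have "\<dots> \<le> \<rho> n"
      proof -
        have "real (n - 1) * ((\<kappa> / 2) * real n powr (-t)) \<le> real (n - 1) * q"
          by (rule mult_left_mono[OF qk]) simp
        moreover have "real (n - 1) = real n - 1" using n by (simp add: of_nat_diff)
        ultimately show ?thesis unfolding \<rho>_def by simp
      qed
      finally show ?thesis by (simp add: q_def)
    qed
    define x where "x = real n * p n"
    have xpos: "0 < x" using np by (simp add: x_def)
    have ax: "\<epsilon> * real n * p n / 2 = \<epsilon> * x / 2" by (simp add: x_def mult.assoc)
    have Rint: "integrable (sample_space n (L n)) (Rn g n)" using ER(1)[OF g_meas g_L2, where n=n] .
    have Rnn: "AE \<omega> in sample_space n (L n). 0 \<le> Rn g n \<omega>"
      by (intro AE_I2) (simp add: Rn_def[OF g_meas g_L2] sum_nonneg Rterm_nonneg[OF g_meas g_L2])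
    have M1: "measure (sample_space n (L n)) (E2 n) \<le> (\<integral>\<omega>. Rn g n \<omega> \<partial>sample_space n (L n)) / (\<epsilon> * x / 2)"
      unfolding E2_def ax[symmetric] by (rule integral_Markov_inequality_measure[OF Rint sets.top Rnn a])
    have s1: "(\<integral>\<omega>. Rn g n \<omega> \<partial>sample_space n (L n)) \<le> (\<Sum>i\<in>{1..n}. \<Sum>a\<in>\<A> n. p n * Ia g a * \<rho> n)"
      unfolding ER(2)[OF g_meas g_L2]
      using qb p_pos[OF n] Ia_nonneg[OF g_meas g_L2]
      by (intro sum_mono mult_left_mono) (auto intro: mult_nonneg_nonneg)
    have s2: "(\<Sum>a\<in>\<A> n. p n * Ia g a * \<rho> n) = p n * \<rho> n * (\<Sum>a\<in>\<A> n. Ia g a)"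
      by (simp add: sum_distrib_left mult_ac)
    have s3: "(\<Sum>i\<in>{1..n}. \<Sum>a\<in>\<A> n. p n * Ia g a * \<rho> n) = x * \<rho> n * (\<Sum>a\<in>\<A> n. Ia g a)"
      unfolding s2 by (simp add: x_def mult_ac)
    have s4: "x * \<rho> n * (\<Sum>a\<in>\<A> n. Ia g a) \<le> x * \<rho> n * J"
      using sum_Ia[OF g_meas g_L2, where n=n] xpos unfolding J_def by (intro mult_left_mono) (auto simp: \<rho>_def)
    have I1: "(\<integral>\<omega>. Rn g n \<omega> \<partial>sample_space n (L n)) \<le> x * \<rho> n * J" using s1 s3 s4 by linarith
    have "measure (sample_space n (L n)) (E2 n) \<le> x * \<rho> n * J / (\<epsilon> * x / 2)"
      using M1 divide_right_mono[OF I1, of "\<epsilon> * x / 2"] xpos e by simp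
    also have "\<dots> = (2 * J / \<epsilon>) * \<rho> n" using xpos e by (simp add: field_simps)
    finally show ?thesis .
  qed
  have lim: "(\<lambda>n. measure (sample_space n (L n)) (E1 n \<union> E2 n)) \<longlonglongrightarrow> 0"
  proof (rule tendsto_sandwich[OF _ _ tendsto_const])
    show "eventually (\<lambda>n. 0 \<le> measure (sample_space n (L n)) (E1 n \<union> E2 n)) sequentially" by simp
    show "eventually (\<lambda>n. measure (sample_space n (L n)) (E1 n \<union> E2 n) \<le>
        (4 * K / \<epsilon>\<^sup>2) * (1 / (real n * p n)) + (2 * J / \<epsilon>) * \<rho> n) sequentially"
      using ev1 evp
    proof eventually_elim
      case (elim n)
      have "measure (sample_space n (L n)) (E1 n \<union> E2 n) \<le> measure (sample_space n (L n)) (E1 n) + measure (sample_space n (L n)) (E2 n)"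
        using E1_sets E2_sets by (rule measure_Un_le)
      then show ?case using bnd1[OF elim(1)] bnd2[OF elim] by linarith
    qed
    have l1: "(\<lambda>n. (4 * K / \<epsilon>\<^sup>2) * (1 / (real n * p n))) \<longlonglongrightarrow> 0"
      by (rule tendsto_mult_right_zero[OF inv_np_lim[OF c0(1) b0 c0(2)]])
    have l2: "(\<lambda>n. (2 * J / \<epsilon>) * \<rho> n) \<longlonglongrightarrow> 0"
      unfolding \<rho>_def by (rule tendsto_mult_right_zero[OF exp_decay]) (use k(1) t1 in auto)
    show "(\<lambda>n. (4 * K / \<epsilon>\<^sup>2) * (1 / (real n * p n)) + (2 * J / \<epsilon>) * \<rho> n) \<longlonglongrightarrow> 0"
      using tendsto_add[OF l1 l2] by simp
  qed
  have ex: "\<exists>E. (\<forall>n. E n \<in> sets (sample_space n (L n))) \<and>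
     eventually (\<lambda>n. {\<omega>\<in>space (sample_space n (L n)). \<epsilon> < \<bar>(1 / (real n * p n)) * (\<Sum>i\<in>matched_treated (\<A> n) n \<omega>. g (\<omega> i)) - \<mu>\<bar>} \<subseteq> E n) sequentially \<and>
     (\<lambda>n. measure (sample_space n (L n)) (E n)) \<longlonglongrightarrow> 0"
    apply (rule exI[of _ "\<lambda>n. E1 n \<union> E2 n"])
    apply (rule conjI)
     apply (rule sets)
    apply (rule conjI)
     apply (rule incl)
    apply (rule lim)
    done
  show "\<exists>E. (\<forall>n. E n \<in> sets (sample_space n (L n))) \<and>
     eventually (\<lambda>n. {\<omega>\<in>space (sample_space n (L n)). \<epsilon> < \<bar>(1 / (real n * p n)) * (\<Sum>i\<in>matched_treated (\<A> n) n \<omega>. g (\<omega> i)) - (\<integral>w. psi g w \<partial>Q True)\<bar>} \<subseteq> E n) sequentially \<and>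
     (\<lambda>n. measure (sample_space n (L n)) (E n)) \<longlonglongrightarrow> 0"
    using ex unfolding \<mu>_def .
qed

end
end

theorem mainTheorem14:
  fixes L :: "nat \<Rightarrow> ('d::finite) obs measure"    \<comment> \<open>law of V^i for sample size n\<close>
    and Q :: "bool \<Rightarrow> ((real^'d) \<times> real \<times> real) measure"  \<comment> \<open>law of (X,T,U) given Z = z\<close>
    and p :: "nat \<Rightarrow> real"                 \<comment> \<open>P(Z^1 = 1) for sample size n\<close>
    and \<nu> :: "(real^'d) measure"
    and f :: "bool \<Rightarrow> real^'d \<Rightarrow> real"     \<comment> \<open>densities f(. | z)\<close>
    and m :: "real^'d \<Rightarrow> real"              \<comment> \<open>a version of E[Y_tau | X = x, Z = 0]\<close>
    and \<X> :: "(real^'d) set"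
    and \<A> :: "nat \<Rightarrow> (real^'d) set set"
    and g :: "'d obs \<Rightarrow> real"
    and \<tau> \<beta> \<theta> :: real and dbar :: nat
  assumes
    \<comment> \<open>setting\<close>
    Q_prob: "\<And>z. prob_space (Q z)" and Q_sets: "\<And>z. sets (Q z) = sets xtuM"
    and Q_pos: "\<And>z. AE w in Q z. 0 < fst (snd w) \<and> 0 < snd (snd w)"
    and L_prob: "\<And>n. prob_space (L n)" and L_sets: "\<And>n. sets (L n) = sets obsM"
    and L_mix1: "\<And>n A. A \<in> sets xtuM \<Longrightarrow> measure (L n) (zevent True A) = p n * measure (Q True) A"
    and L_mix0: "\<And>n A. A \<in> sets xtuM \<Longrightarrow> measure (L n) (zevent False A) = (1 - p n) * measure (Q False) A"
    and tau_pos: "0 < \<tau>"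
    and X_compact: "compact \<X>"
    and A_part: "\<And>n. meas_partition (\<A> n) \<X>"
    \<comment> \<open>[B1]\<close>
    and B1: "0 < \<beta>" "\<beta> < 1" "0 < \<theta>" "\<theta> < 1" "1 \<le> dbar" "dbar \<le> CARD('d)"
            "\<beta> < 2 * \<theta>" "real dbar * \<theta> < 1"
    \<comment> \<open>[B2]\<close>
    and B2: "\<exists>c C. 0 < c \<and> (\<forall>n\<ge>1. c * real n powr (\<beta> - 1) \<le> p n \<and> p n \<le> C * real n powr (\<beta> - 1))"
    \<comment> \<open>[B3]\<close>
    and nu_sets: "sets \<nu> = sets borel" and nu_sf: "sigma_finite_measure \<nu>"
    and nu_X: "emeasure \<nu> \<X> < \<infinity>"
    and f_meas: "\<And>z. f z \<in> borel_measurable borel" and f_nonneg: "\<And>z x. 0 \<le> f z x"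
    and f_dens: "\<And>z. distr (Q z) borel fst = density \<nu> (\<lambda>x. ennreal (f z x))"
    and f1_esssup: "\<exists>M. AE x in \<nu>. x \<in> \<X> \<longrightarrow> f True x \<le> M"
    and m_meas: "m \<in> borel_measurable borel" and m_range: "\<And>x. 0 \<le> m x \<and> m x \<le> 1"
    and m_condexp: "\<And>B. B \<in> sets borel \<Longrightarrow>
          measure (Q False) {w. fst w \<in> B \<and> \<tau> \<le> min (fst (snd w)) (snd (snd w))}
            = (LINT x:B|distr (Q False) borel fst. m x)"
    and f0m_essinf: "\<exists>c>0. AE x in \<nu>. x \<in> \<X> \<longrightarrow> c \<le> f False x * m x"
    \<comment> \<open>[B4]\<close>
    and B4_atom: "\<And>s. 0 \<le> s \<Longrightarrow> s \<le> \<tau> \<Longrightarrow>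
          measure (Q True) {w. min (fst (snd w)) (snd (snd w)) = s \<and> fst w \<in> \<X>} = 0"
    and B4_pos: "measure (Q True) {w. \<tau> \<le> min (fst (snd w)) (snd (snd w)) \<and> fst w \<in> \<X>} > 0"
    \<comment> \<open>[B5]\<close>
    and B5_diam: "\<exists>C. \<forall>n\<ge>1. \<forall>a\<in>\<A> n. diameter a \<le> C * real n powr (- \<theta>)"
    and B5_vol: "\<exists>c C. 0 < c \<and> (\<forall>n\<ge>1. \<forall>a\<in>\<A> n.
          c * real n powr (- (real dbar * \<theta>)) \<le> measure \<nu> a \<and>
          measure \<nu> a \<le> C * real n powr (- (real dbar * \<theta>)))"
    \<comment> \<open>the function g\<close>
    and g_meas: "g \<in> borel_measurable obsM"
    and g_L2: "integrable (Q True) (\<lambda>w. (g (fst w, True, snd w))\<^sup>2)"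
  shows
    "conv_prob (\<lambda>n. sample_space n (L n))
       (\<lambda>n \<omega>. (1 / (real n * p n)) * (\<Sum>i\<in>matched_treated (\<A> n) n \<omega>. g (\<omega> i)))
       (\<integral>w. g (fst w, True, snd w) * indicator \<X> (fst w) \<partial>Q True)
     \<and> conv_prob (\<lambda>n. sample_space n (L n))
       (\<lambda>n \<omega>. pinv (real (card (matched_treated (\<A> n) n \<omega>))) *
                (\<Sum>i\<in>matched_treated (\<A> n) n \<omega>. g (\<omega> i)))
       ((\<integral>w. g (fst w, True, snd w) * indicator \<X> (fst w) \<partial>Q True)
          / measure (Q True) {w. fst w \<in> \<X>})
     \<and> conv_prob (\<lambda>n. sample_space n (L n))
       (\<lambda>n \<omega>. real (card (matched_treated (\<A> n) n \<omega>)) / (real n * p n))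
       (measure (Q True) {w. fst w \<in> \<X>})
     \<and> measure (Q True) {w. fst w \<in> \<X>} > 0"
proof -
  interpret mainsetup L Q p \<nu> f m \<X> \<A> \<beta> "real dbar * \<theta>"
    by (intro mainsetup.intro mixsetup.intro mainsetup_axioms.intro)
      (fact Q_prob Q_sets L_prob L_sets L_mix1 L_mix0 A_part B1 B2 nu_sets nu_X f_meas f_nonneg f_dens
      m_range f0m_essinf B5_vol)+
  have fin: "\<And>n. finite_measure (sample_space n (L n))"
    unfolding sample_space_def
    by (intro prob_space.finite_measure prob_space_PiM L_prob)
  interpret Q1: prob_space "Q True" by (rule Q_prob)
  have c1: "conv2 (\<lambda>n. sample_space n (L n))
     (\<lambda>n \<omega>. (1 / (real n * p n)) * (\<Sum>i\<in>matched_treated (\<A> n) n \<omega>. g (\<omega> i)))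
     (\<integral>w. psi g w \<partial>Q True)"
    by (rule claim1[OF g_meas g_L2])
  have psi_eq: "(\<integral>w. psi g w \<partial>Q True) = (\<integral>w. g (fst w, True, snd w) * indicator \<X> (fst w) \<partial>Q True)"
    by (rule Bochner_Integration.integral_cong[OF refl]) (simp add: psi_def[OF g_meas g_L2] phi_def[OF g_meas g_L2] indicator_def)
  have one_meas: "(\<lambda>_::'d obs. 1::real) \<in> borel_measurable obsM" by simp
  have one_L2: "integrable (Q True) (\<lambda>w. ((\<lambda>_::'d obs. 1::real) (fst w, True, snd w))\<^sup>2)" by simp
  have c3': "conv2 (\<lambda>n. sample_space n (L n))
     (\<lambda>n \<omega>. (1 / (real n * p n)) * (\<Sum>i\<in>matched_treated (\<A> n) n \<omega>. (\<lambda>_. 1::real) (\<omega> i)))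
     (\<integral>w. psi (\<lambda>_. 1) w \<partial>Q True)"
    by (rule claim1[OF one_meas one_L2])
  have psi1: "(\<integral>w. psi (\<lambda>_. 1) w \<partial>Q True) = measure (Q True) {w. fst w \<in> \<X>}"
  proof -
    have "(\<integral>w. psi (\<lambda>_. 1) w \<partial>Q True) = (\<integral>w. indicator {w. fst w \<in> \<X>} w \<partial>Q True)"
      by (rule Bochner_Integration.integral_cong[OF refl]) (simp add: psi_def[OF one_meas one_L2] phi_def[OF one_meas one_L2])
    also have "\<dots> = measure (Q True) {w. fst w \<in> \<X>}"
      using setX_meas[OF X_borel] by (simp add: Q_sets)
    finally show ?thesis .
  qed
  have c3: "conv2 (\<lambda>n. sample_space n (L n))
     (\<lambda>n \<omega>. real (card (matched_treated (\<A> n) n \<omega>)) / (real n * p n))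
     (measure (Q True) {w. fst w \<in> \<X>})"
    using conv2_cong[OF c3'[unfolded psi1], of "\<lambda>n \<omega>. real (card (matched_treated (\<A> n) n \<omega>)) / (real n * p n)"]
    by (simp add: always_eventually)
  have pos: "measure (Q True) {w. fst w \<in> \<X>} > 0"
  proof -
    have "measure (Q True) {w. \<tau> \<le> min (fst (snd w)) (snd (snd w)) \<and> fst w \<in> \<X>} \<le> measure (Q True) {w. fst w \<in> \<X>}"
      using setX_meas[OF X_borel] by (intro Q1.finite_measure_mono) (auto simp: Q_sets)
    then show ?thesis using B4_pos by linarith
  qed
  have c2': "conv2 (\<lambda>n. sample_space n (L n))
     (\<lambda>n \<omega>. ((1 / (real n * p n)) * (\<Sum>i\<in>matched_treated (\<A> n) n \<omega>. g (\<omega> i))) /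
             (real (card (matched_treated (\<A> n) n \<omega>)) / (real n * p n)))
     ((\<integral>w. psi g w \<partial>Q True) / measure (Q True) {w. fst w \<in> \<X>})"
    by (rule conv2_ratio[OF fin c1 c3 pos])
  have eqr: "pinv (real (card (matched_treated (\<A> n) n \<omega>))) * (\<Sum>i\<in>matched_treated (\<A> n) n \<omega>. g (\<omega> i)) =
      ((1 / (real n * p n)) * (\<Sum>i\<in>matched_treated (\<A> n) n \<omega>. g (\<omega> i))) /
             (real (card (matched_treated (\<A> n) n \<omega>)) / (real n * p n))" if n: "1 \<le> n" for n \<omega>
  proof -
    have np: "real n * p n \<noteq> 0" using n p_pos[OF n] by simp
    show ?thesis
      by (cases "card (matched_treated (\<A> n) n \<omega>) = 0") (use np in \<open>auto simp: pinv_def field_simps\<close>)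
  qed
  have c2: "conv2 (\<lambda>n. sample_space n (L n))
       (\<lambda>n \<omega>. pinv (real (card (matched_treated (\<A> n) n \<omega>))) *
                (\<Sum>i\<in>matched_treated (\<A> n) n \<omega>. g (\<omega> i)))
       ((\<integral>w. psi g w \<partial>Q True) / measure (Q True) {w. fst w \<in> \<X>})"
  proof (rule conv2_cong[OF c2'])
    show "eventually (\<lambda>n. \<forall>\<omega>\<in>space (sample_space n (L n)).
        pinv (real (card (matched_treated (\<A> n) n \<omega>))) * (\<Sum>i\<in>matched_treated (\<A> n) n \<omega>. g (\<omega> i)) =
      ((1 / (real n * p n)) * (\<Sum>i\<in>matched_treated (\<A> n) n \<omega>. g (\<omega> i))) /
             (real (card (matched_treated (\<A> n) n \<omega>)) / (real n * p n))) sequentially"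
      using eventually_ge_at_top[of "1::nat"]
    proof eventually_elim
      case (elim n)
      show ?case using eqr[OF elim] by blast
    qed
  qed
  show ?thesis
    using conv2_imp[OF fin c1] conv2_imp[OF fin c2] conv2_imp[OF fin c3] pos
    unfolding psi_eq by blast
qed

end
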